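(* Let $1\le p<\infty$ and let $d_{w,p}$ be a Lorentz sequence space. Then $\mathcal K(d_{w,p})\subsetneq\overline{J^j}$ and $J^j\subseteq \mathcal{SS}(d_{w,p})\cap J^{\ell_p}$.
   Context: Let $1\le p<\infty$ and let $w=(w_n)$ be a real sequence with $w_1=1$, $w_n\downarrow 0$ and $\sum_n w_n=\infty$. The Lorentz sequence space $d_{w,p}$ is the Banach space of all $x=(x_n)\in c_0$ with $\|x\|_{d_{w,p}}=\big(\sum_{n}w_n (x^*_n)^p\big)^{1/p}<\infty$, where $(x^*_n)$ is the non-increasing rearrangement of $(|x_n|)$. Let $(e_n)$, $(f_n)$ be the unit vector bases of $d_{w,p}$, $\ell_p$, and $j\colon\ell_p\to d_{w,p}$ the formal identity, $j(f_n)=e_n$. $J^j$ is the set of $S\in L(d_{w,p})$ of the form $S=AjB$ with $A\in L(d_{w,p})$, $B\in L(d_{w,p},\ell_p)$; $\overline{J^j}$ is its norm closure. $J^{\ell_p}$ is the set of $S\in L(d_{w,p})$ of the form $S=BA$ with $A\in L(d_{w,p},\ell_p)$, $B\in L(\ell_p,d_{w,p})$. $\mathcal K(d_{w,p})$ and $\mathcal{SS}(d_{w,p})$ denote the compact and strictly singular operators on $d_{w,p}$ respectively. *)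

theory Defs
  imports "HOL-Analysis.Analysis"
begin

text \<open>Real sequences are functions nat => real; indices start at 0
  (so the paper's w_1 is w 0 here). Operators are maps on sequences; only their
  values on the relevant domain space matter.\<close>

type_synonym seq = "nat \<Rightarrow> real"

text \<open>Non-increasing rearrangement of (|x_n|) (for x in c_0):
  x*_(n+1) = inf over sets A with |A| <= n of sup_{k not in A} |x_k|.\<close>
definition rearr :: "seq \<Rightarrow> nat \<Rightarrow> real" where
  "rearr x n = (INF A \<in> {A :: nat set. finite A \<and> card A \<le> n}. SUP k \<in> - A. \<bar>x k\<bar>)"

definition c0 :: "seq set" where
  "c0 = {x. x \<longlonglongrightarrow> 0}"

definition lorentz_space :: "seq \<Rightarrow> real \<Rightarrow> seq set" where
  "lorentz_space w p = {x \<in> c0. summable (\<lambda>n. w n * rearr x n powr p)}"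

definition lorentz_norm :: "seq \<Rightarrow> real \<Rightarrow> seq \<Rightarrow> real" where
  "lorentz_norm w p x = (\<Sum>n. w n * rearr x n powr p) powr (1 / p)"

definition lp_space :: "real \<Rightarrow> seq set" where
  "lp_space p = {x. summable (\<lambda>n. \<bar>x n\<bar> powr p)}"

definition lp_norm :: "real \<Rightarrow> seq \<Rightarrow> real" where
  "lp_norm p x = (\<Sum>n. \<bar>x n\<bar> powr p) powr (1 / p)"

definition bounded_op ::
  "seq set \<Rightarrow> (seq \<Rightarrow> real) \<Rightarrow> seq set \<Rightarrow> (seq \<Rightarrow> real) \<Rightarrow> (seq \<Rightarrow> seq) \<Rightarrow> bool" where
  "bounded_op X NX Y NY T \<longleftrightarrow>
     (\<forall>x\<in>X. T x \<in> Y) \<and>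
     (\<forall>x\<in>X. \<forall>y\<in>X. \<forall>a b::real. T (\<lambda>k. a * x k + b * y k) = (\<lambda>k. a * T x k + b * T y k)) \<and>
     (\<exists>C. \<forall>x\<in>X. NY (T x) \<le> C * NX x)"

text \<open>Formal identity j : l_p -> d_{w,p}, j(f_n) = e_n.\<close>
definition jmap :: "seq \<Rightarrow> seq" where
  "jmap x = x"

definition Ld :: "seq \<Rightarrow> real \<Rightarrow> (seq \<Rightarrow> seq) set" where
  "Ld w p = {T. bounded_op (lorentz_space w p) (lorentz_norm w p)
                           (lorentz_space w p) (lorentz_norm w p) T}"

definition J_j :: "seq \<Rightarrow> real \<Rightarrow> (seq \<Rightarrow> seq) set" where
  "J_j w p = {S \<in> Ld w p. \<exists>A B.
      A \<in> Ld w p \<and>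
      bounded_op (lorentz_space w p) (lorentz_norm w p) (lp_space p) (lp_norm p) B \<and>
      (\<forall>x\<in>lorentz_space w p. S x = A (jmap (B x)))}"

definition op_closure :: "seq \<Rightarrow> real \<Rightarrow> (seq \<Rightarrow> seq) set \<Rightarrow> (seq \<Rightarrow> seq) set" where
  "op_closure w p \<J> = {S \<in> Ld w p. \<forall>\<epsilon>>0. \<exists>T\<in>\<J>.
      \<forall>x\<in>lorentz_space w p.
        lorentz_norm w p (\<lambda>k. S x k - T x k) \<le> \<epsilon> * lorentz_norm w p x}"

definition J_lp :: "seq \<Rightarrow> real \<Rightarrow> (seq \<Rightarrow> seq) set" where
  "J_lp w p = {S \<in> Ld w p. \<exists>A B.
      bounded_op (lorentz_space w p) (lorentz_norm w p) (lp_space p) (lp_norm p) A \<and>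
      bounded_op (lp_space p) (lp_norm p) (lorentz_space w p) (lorentz_norm w p) B \<and>
      (\<forall>x\<in>lorentz_space w p. S x = B (A x))}"

definition compact_ops :: "seq \<Rightarrow> real \<Rightarrow> (seq \<Rightarrow> seq) set" where
  "compact_ops w p = {T \<in> Ld w p. \<forall>xs :: nat \<Rightarrow> seq.
      (\<forall>i. xs i \<in> lorentz_space w p \<and> lorentz_norm w p (xs i) \<le> 1) \<longrightarrow>
      (\<exists>r y. strict_mono r \<and> y \<in> lorentz_space w p \<and>
         (\<lambda>i. lorentz_norm w p (\<lambda>k. T (xs (r i)) k - y k)) \<longlonglongrightarrow> 0)}"

definition lin_subspace :: "seq set \<Rightarrow> bool" where
  "lin_subspace M \<longleftrightarrow> (\<lambda>k. 0) \<in> M \<and>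
     (\<forall>x\<in>M. \<forall>y\<in>M. \<forall>a b::real. (\<lambda>k. a * x k + b * y k) \<in> M)"

definition infinite_dim :: "seq set \<Rightarrow> bool" where
  "infinite_dim M \<longleftrightarrow> (\<exists>v :: nat \<Rightarrow> seq. (\<forall>i. v i \<in> M) \<and>
     (\<forall>n (c :: nat \<Rightarrow> real). (\<forall>k. (\<Sum>i<n. c i * v i k) = 0) \<longrightarrow> (\<forall>i<n. c i = 0)))"

definition strictly_singular_ops :: "seq \<Rightarrow> real \<Rightarrow> (seq \<Rightarrow> seq) set" where
  "strictly_singular_ops w p = {T \<in> Ld w p. \<forall>M.
      M \<subseteq> lorentz_space w p \<and> lin_subspace M \<and> infinite_dim M \<longrightarrow>
      \<not> (\<exists>c>0. \<forall>x\<in>M. c * lorentz_norm w p x \<le> lorentz_norm w p (T x))}"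

end

theory Submission
  imports Defs
begin


definition Sx :: "seq \<Rightarrow> nat set \<Rightarrow> real" where
  "Sx x A = (SUP k\<in>-A. \<bar>x k\<bar>)"

definition bnd :: "seq \<Rightarrow> bool" where
  "bnd x \<longleftrightarrow> (\<exists>B. \<forall>k. \<bar>x k\<bar> \<le> B)"

lemma c0_bnd: "x \<in> c0 \<Longrightarrow> bnd x"
proof -
  assume "x \<in> c0"
  then have "convergent x" unfolding c0_def convergent_def by auto
  then have "Bseq x" by (rule convergent_imp_Bseq)
  then show ?thesis unfolding bnd_def Bseq_def by (metis real_norm_def less_imp_le)
qed

lemma finite_compl_ne: "finite (A::nat set) \<Longrightarrow> -A \<noteq> {}"
proof
  assume "finite A" "-A = {}"
  then have "A = UNIV" by auto
  then show False using \<open>finite A\<close> infinite_UNIV_nat by simp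
qed

lemma Sx_upper: "bnd x \<Longrightarrow> k \<notin> A \<Longrightarrow> \<bar>x k\<bar> \<le> Sx x A"
  unfolding Sx_def bnd_def
  by (rule cSUP_upper) (auto intro: bdd_aboveI2)

lemma Sx_least: "finite A \<Longrightarrow> (\<And>k. k \<notin> A \<Longrightarrow> \<bar>x k\<bar> \<le> c) \<Longrightarrow> Sx x A \<le> c"
  unfolding Sx_def by (rule cSUP_least) (auto simp: finite_compl_ne)

lemma Sx_nonneg: "bnd x \<Longrightarrow> finite A \<Longrightarrow> 0 \<le> Sx x A"
proof -
  assume "bnd x" "finite A"
  then obtain k where "k \<notin> A" using finite_compl_ne by blast
  then show ?thesis using Sx_upper[OF \<open>bnd x\<close>, of k A] by linarith
qed

lemma rearr_alt: "rearr x n = (INF A \<in> {A :: nat set. finite A \<and> card A \<le> n}. Sx x A)"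
  unfolding rearr_def Sx_def by simp

lemma rearr_le: "bnd x \<Longrightarrow> finite A \<Longrightarrow> card A \<le> n \<Longrightarrow> rearr x n \<le> Sx x A"
  unfolding rearr_alt
  by (rule cINF_lower) (auto intro!: bdd_belowI2[where m=0] Sx_nonneg)

lemma rearr_ge: "(\<And>A. finite A \<Longrightarrow> card A \<le> n \<Longrightarrow> c \<le> Sx x A) \<Longrightarrow> c \<le> rearr x n"
  unfolding rearr_alt
  by (rule cINF_greatest) (auto intro: exI[of _ "{}"])

lemma rearr_nonneg: "bnd x \<Longrightarrow> 0 \<le> rearr x n"
  by (rule rearr_ge) (simp add: Sx_nonneg)

lemma rearr_0_ge: "bnd x \<Longrightarrow> \<bar>x k\<bar> \<le> rearr x 0"
  by (rule rearr_ge) (auto intro: Sx_upper)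

lemma rearr_bound: "bnd x \<Longrightarrow> (\<And>k. \<bar>x k\<bar> \<le> c) \<Longrightarrow> rearr x n \<le> c"
  using rearr_le[of x "{}" n] Sx_least[of "{}" x c] by force

lemma rearr_mono_fun: "bnd y \<Longrightarrow> (\<And>k. \<bar>x k\<bar> \<le> \<bar>y k\<bar>) \<Longrightarrow> rearr x n \<le> rearr y n"
proof -
  assume y: "bnd y" and le: "\<And>k. \<bar>x k\<bar> \<le> \<bar>y k\<bar>"
  have bx: "bnd x" using y le unfolding bnd_def by (meson order_trans)
  show ?thesis
  proof (rule rearr_ge)
    fix A :: "nat set" assume A: "finite A" "card A \<le> n"
    have "rearr x n \<le> Sx x A" by (rule rearr_le[OF bx A])
    also have "\<dots> \<le> Sx y A" using A le Sx_upper[OF y]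
      by (intro Sx_least) (auto intro: order_trans)
    finally show "rearr x n \<le> Sx y A" .
  qed
qed

lemma rearr_Suc_le: "bnd x \<Longrightarrow> rearr x (Suc n) \<le> rearr x n"
  by (rule rearr_ge) (auto intro: rearr_le)

lemma rearr_antimono: "bnd x \<Longrightarrow> m \<le> n \<Longrightarrow> rearr x n \<le> rearr x m"
proof -
  assume b: "bnd x" and mn: "m \<le> n"
  show ?thesis using mn
  proof (induction n rule: dec_induct)
    case base then show ?case by simp
  next
    case (step k) then show ?case using rearr_Suc_le[OF b, of k] by linarith
  qed
qed

lemma rearr_finsupp: "bnd x \<Longrightarrow> finite F \<Longrightarrow> card F \<le> n \<Longrightarrow> (\<And>k. k \<notin> F \<Longrightarrow> x k = 0) \<Longrightarrow> rearr x n = 0"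
proof -
  assume b: "bnd x" "finite F" "card F \<le> n" and z: "\<And>k. k \<notin> F \<Longrightarrow> x k = 0"
  have "rearr x n \<le> Sx x F" by (rule rearr_le) (use b in auto)
  also have "\<dots> \<le> 0" by (rule Sx_least) (use b z in auto)
  finally show ?thesis using rearr_nonneg[OF b(1), of n] by linarith
qed

lemma rearr_scale_le: "bnd x \<Longrightarrow> rearr (\<lambda>k. c * x k) n \<le> \<bar>c\<bar> * rearr x n"
proof (cases "c = 0")
  case True
  have "bnd (\<lambda>k. c * x k)" using True unfolding bnd_def by (intro exI[of _ 0]) simp
  then show ?thesis using rearr_finsupp[of "\<lambda>k. c * x k" "{}" n] True by simp
next
  case False
  assume b: "bnd x"
  have bc: "bnd (\<lambda>k. c * x k)" using b unfolding bnd_def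
    by (metis abs_mult mult_left_mono abs_ge_zero)
  have "rearr (\<lambda>k. c * x k) n / \<bar>c\<bar> \<le> rearr x n"
  proof (rule rearr_ge)
    fix A :: "nat set" assume A: "finite A" "card A \<le> n"
    have "rearr (\<lambda>k. c * x k) n \<le> Sx (\<lambda>k. c * x k) A" by (rule rearr_le[OF bc A])
    also have "\<dots> \<le> \<bar>c\<bar> * Sx x A"
      by (rule Sx_least) (use A Sx_upper[OF b] in \<open>auto simp: abs_mult intro: mult_left_mono\<close>)
    finally show "rearr (\<lambda>k. c * x k) n / \<bar>c\<bar> \<le> Sx x A" using False
      by (simp add: divide_le_eq mult.commute)
  qed
  then show ?thesis using False by (simp add: divide_le_eq mult.commute)
qed

lemma bnd_scale: "bnd x \<Longrightarrow> bnd (\<lambda>k. c * x k)"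
  unfolding bnd_def by (metis abs_mult mult_left_mono abs_ge_zero)

lemma rearr_scale: "bnd x \<Longrightarrow> rearr (\<lambda>k. c * x k) n = \<bar>c\<bar> * rearr x n"
proof (cases "c = 0")
  case True
  have "bnd (\<lambda>k. c * x k)" using True unfolding bnd_def by (intro exI[of _ 0]) simp
  then show ?thesis using rearr_finsupp[of "\<lambda>k. c * x k" "{}" n] True by simp
next
  case False
  assume b: "bnd x"
  have "rearr x n = rearr (\<lambda>k. (1/c) * (c * x k)) n" using False by simp
  also have "\<dots> \<le> \<bar>1/c\<bar> * rearr (\<lambda>k. c * x k) n"
    by (rule rearr_scale_le[OF bnd_scale[OF b]])
  finally have "\<bar>c\<bar> * rearr x n \<le> rearr (\<lambda>k. c * x k) n" using False
    by (simp add: field_simps abs_divide)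
  then show ?thesis using rearr_scale_le[OF b, of c n] by linarith
qed

lemma bnd_add: "bnd x \<Longrightarrow> bnd y \<Longrightarrow> bnd (\<lambda>k. x k + y k)"
  unfolding bnd_def by (metis abs_triangle_ineq add_mono order_trans)

lemma rearr_add: "bnd x \<Longrightarrow> bnd y \<Longrightarrow> rearr (\<lambda>k. x k + y k) (m + n) \<le> rearr x m + rearr y n"
proof -
  assume bx: "bnd x" and by': "bnd y"
  have bxy: "bnd (\<lambda>k. x k + y k)" by (rule bnd_add[OF bx by'])
  have "rearr (\<lambda>k. x k + y k) (m + n) - rearr y n \<le> rearr x m"
  proof (rule rearr_ge)
    fix A :: "nat set" assume A: "finite A" "card A \<le> m"
    have "rearr (\<lambda>k. x k + y k) (m + n) - Sx x A \<le> rearr y n"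
    proof (rule rearr_ge)
      fix B :: "nat set" assume B: "finite B" "card B \<le> n"
      have "card (A \<union> B) \<le> m + n" using A B card_Un_le[of A B] by linarith
      then have "rearr (\<lambda>k. x k + y k) (m + n) \<le> Sx (\<lambda>k. x k + y k) (A \<union> B)"
        using A B by (intro rearr_le[OF bxy]) auto
      also have "\<dots> \<le> Sx x A + Sx y B"
      proof (rule Sx_least)
        show "finite (A \<union> B)" using A B by auto
        fix k assume "k \<notin> A \<union> B"
        then show "\<bar>x k + y k\<bar> \<le> Sx x A + Sx y B"
          using Sx_upper[OF bx, of k A] Sx_upper[OF by', of k B] by auto
      qed
      finally show "rearr (\<lambda>k. x k + y k) (m + n) - Sx x A \<le> Sx y B" by linarith
    qed
    then show "rearr (\<lambda>k. x k + y k) (m + n) - rearr y n \<le> Sx x A" by linarith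
  qed
  then show ?thesis by linarith
qed


lemma c0_argmax: "x \<in> c0 \<Longrightarrow> \<exists>k0. \<forall>k. \<bar>x k\<bar> \<le> \<bar>x k0\<bar>"
proof -
  assume x: "x \<in> c0"
  show ?thesis
  proof (cases "\<forall>k. x k = 0")
    case True then show ?thesis by auto
  next
    case False
    then obtain j where j: "x j \<noteq> 0" by auto
    from x have "x \<longlonglongrightarrow> 0" unfolding c0_def by simp
    then have "\<forall>\<^sub>F k in sequentially. \<bar>x k\<bar> < \<bar>x j\<bar>"
      using j by (auto dest!: order_tendstoD(2)[OF tendsto_rabs, of _ 0 _ "\<bar>x j\<bar>"])
    then obtain N where N: "\<And>k. k \<ge> N \<Longrightarrow> \<bar>x k\<bar> < \<bar>x j\<bar>"
      unfolding eventually_sequentially by auto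
    define M where "M = max N j"
    define m where "m = Max ((\<lambda>k. \<bar>x k\<bar>) ` {..M})"
    have "m \<in> (\<lambda>k. \<bar>x k\<bar>) ` {..M}" unfolding m_def by (rule Max_in) auto
    then obtain k0 where k0a: "k0 \<in> {..M}" "\<bar>x k0\<bar> = m" by auto
    have k0b: "\<And>k. k \<in> {..M} \<Longrightarrow> \<bar>x k\<bar> \<le> \<bar>x k0\<bar>" unfolding k0a(2) m_def
      by (rule Max_ge) auto
    note k0 = k0a(1) k0b
    have "\<bar>x k\<bar> \<le> \<bar>x k0\<bar>" for k
    proof (cases "k \<le> M")
      case True then show ?thesis using k0 by auto
    next
      case False then have "k \<ge> N" unfolding M_def by auto
      then have "\<bar>x k\<bar> < \<bar>x j\<bar>" by (rule N)
      also have "\<bar>x j\<bar> \<le> \<bar>x k0\<bar>" using k0(2)[of j] unfolding M_def by auto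
      finally show ?thesis by simp
    qed
    then show ?thesis by blast
  qed
qed

lemma c0_upd: "x \<in> c0 \<Longrightarrow> x(k0 := v) \<in> c0"
proof -
  assume "x \<in> c0"
  then have "x \<longlonglongrightarrow> 0" unfolding c0_def by simp
  moreover have "\<forall>\<^sub>F k in sequentially. x k = (x(k0:=v)) k"
    unfolding eventually_sequentially by (intro exI[of _ "Suc k0"]) auto
  ultimately have "(x(k0:=v)) \<longlonglongrightarrow> 0" by (rule Lim_transform_eventually)
  then show ?thesis unfolding c0_def by simp
qed

lemma rearr_0_eq: "x \<in> c0 \<Longrightarrow> (\<And>k. \<bar>x k\<bar> \<le> \<bar>x k0\<bar>) \<Longrightarrow> rearr x 0 = \<bar>x k0\<bar>"
  using rearr_0_ge[OF c0_bnd, of x k0] rearr_bound[OF c0_bnd, of x "\<bar>x k0\<bar>" 0] by force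

lemma rearr_shift:
  assumes x: "x \<in> c0" and k0: "\<And>k. \<bar>x k\<bar> \<le> \<bar>x k0\<bar>"
  shows "rearr x (Suc i) = rearr (x(k0:=0)) i"
proof -
  have bx: "bnd x" by (rule c0_bnd[OF x])
  have bx': "bnd (x(k0:=0))" by (rule c0_bnd[OF c0_upd[OF x]])
  have 1: "rearr x (Suc i) \<le> rearr (x(k0:=0)) i"
  proof (rule rearr_ge)
    fix A :: "nat set" assume A: "finite A" "card A \<le> i"
    have "card (insert k0 A) \<le> Suc i" using A by (simp add: card_insert_if)
    then have "rearr x (Suc i) \<le> Sx x (insert k0 A)" using A by (intro rearr_le[OF bx]) auto
    also have "\<dots> \<le> Sx (x(k0:=0)) A"
    proof (rule Sx_least)
      show "finite (insert k0 A)" using A by simp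
      fix k assume "k \<notin> insert k0 A"
      then show "\<bar>x k\<bar> \<le> Sx (x(k0:=0)) A" using Sx_upper[OF bx', of k A] by auto
    qed
    finally show "rearr x (Suc i) \<le> Sx (x(k0:=0)) A" .
  qed
  have 2: "rearr (x(k0:=0)) i \<le> rearr x (Suc i)"
  proof (rule rearr_ge)
    fix A :: "nat set" assume A: "finite A" "card A \<le> Suc i"
    show "rearr (x(k0:=0)) i \<le> Sx x A"
    proof (cases "k0 \<in> A")
      case True
      have "card (A - {k0}) \<le> i" using A True by (simp add: card_Diff_singleton)
      then have "rearr (x(k0:=0)) i \<le> Sx (x(k0:=0)) (A - {k0})" using A
        by (intro rearr_le[OF bx']) auto
      also have "\<dots> \<le> Sx x A"
      proof (rule Sx_least)
        show "finite (A - {k0})" using A by simp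
        fix k assume "k \<notin> A - {k0}"
        then show "\<bar>(x(k0:=0)) k\<bar> \<le> Sx x A"
          using Sx_upper[OF bx, of k A] Sx_nonneg[OF bx A(1)] by (cases "k = k0") auto
      qed
      finally show ?thesis .
    next
      case False
      have "rearr (x(k0:=0)) i \<le> \<bar>x k0\<bar>"
        by (rule rearr_bound[OF bx']) (use k0 in auto)
      also have "\<dots> \<le> Sx x A" by (rule Sx_upper[OF bx False])
      finally show ?thesis .
    qed
  qed
  from 1 2 show ?thesis by linarith
qed

lemma suminf_upd0:
  fixes x :: seq
  assumes "summable (\<lambda>k. \<bar>x k\<bar> powr p)" "p > 0"
  shows "summable (\<lambda>k. \<bar>(x(k0:=0)) k\<bar> powr p)"
    and "(\<Sum>k. \<bar>x k\<bar> powr p) = \<bar>x k0\<bar> powr p + (\<Sum>k. \<bar>(x(k0:=0)) k\<bar> powr p)"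
proof -
  have eq: "(\<lambda>k. \<bar>x k\<bar> powr p) = (\<lambda>k. (if k = k0 then \<bar>x k0\<bar> powr p else 0) + \<bar>(x(k0:=0)) k\<bar> powr p)"
    using assms(2) by (auto simp: fun_eq_iff)
  have s1: "summable (\<lambda>k. if k = k0 then \<bar>x k0\<bar> powr p else (0::real))"
    by (rule summable_single)
  show s2: "summable (\<lambda>k. \<bar>(x(k0:=0)) k\<bar> powr p)"
    by (rule summable_comparison_test'[OF assms(1), of 0]) auto
  show "(\<Sum>k. \<bar>x k\<bar> powr p) = \<bar>x k0\<bar> powr p + (\<Sum>k. \<bar>(x(k0:=0)) k\<bar> powr p)"
  proof -
    have s3: "(\<Sum>k. if k = k0 then \<bar>x k0\<bar> powr p else (0::real)) = \<bar>x k0\<bar> powr p"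
      using sums_single[of k0 "\<lambda>_. \<bar>x k0\<bar> powr p"] by (simp add: sums_iff)
    show ?thesis by (subst eq, subst suminf_add[OF s1 s2, symmetric]) (simp add: s3)
  qed
qed

lemma sum_rearr_le_lp:
  assumes "p > 0"
  shows "x \<in> c0 \<Longrightarrow> summable (\<lambda>k. \<bar>x k\<bar> powr p) \<Longrightarrow> (\<Sum>i<N. rearr x i powr p) \<le> (\<Sum>k. \<bar>x k\<bar> powr p)"
proof (induction N arbitrary: x)
  case 0
  then show ?case by (auto intro!: suminf_nonneg)
next
  case (Suc N)
  obtain k0 where k0: "\<And>k. \<bar>x k\<bar> \<le> \<bar>x k0\<bar>" using c0_argmax[OF Suc.prems(1)] by blast
  have IH: "(\<Sum>i<N. rearr (x(k0:=0)) i powr p) \<le> (\<Sum>k. \<bar>(x(k0:=0)) k\<bar> powr p)"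
    by (rule Suc.IH[OF c0_upd[OF Suc.prems(1)] suminf_upd0(1)[OF Suc.prems(2) assms]])
  have "(\<Sum>i<Suc N. rearr x i powr p) = rearr x 0 powr p + (\<Sum>i<N. rearr x (Suc i) powr p)"
    by (rule sum.lessThan_Suc_shift)
  also have "\<dots> = \<bar>x k0\<bar> powr p + (\<Sum>i<N. rearr (x(k0:=0)) i powr p)"
    using rearr_0_eq[OF Suc.prems(1) k0] rearr_shift[OF Suc.prems(1) k0] by simp
  also have "\<dots> \<le> \<bar>x k0\<bar> powr p + (\<Sum>k. \<bar>(x(k0:=0)) k\<bar> powr p)" using IH by simp
  also have "\<dots> = (\<Sum>k. \<bar>x k\<bar> powr p)" using suminf_upd0(2)[OF Suc.prems(2) assms] by simp
  finally show ?case .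
qed

lemma sum_lp_le_rearr:
  assumes "p > 0"
  shows "x \<in> c0 \<Longrightarrow> finite F \<Longrightarrow> card F = N \<Longrightarrow> (\<Sum>k\<in>F. \<bar>x k\<bar> powr p) \<le> (\<Sum>i<N. rearr x i powr p)"
proof (induction N arbitrary: x F)
  case 0
  then show ?case by simp
next
  case (Suc N)
  obtain k0 where k0: "\<And>k. \<bar>x k\<bar> \<le> \<bar>x k0\<bar>" using c0_argmax[OF Suc.prems(1)] by blast
  have bx: "bnd x" by (rule c0_bnd[OF Suc.prems(1)])
  have "F \<noteq> {}" using Suc.prems by auto
  then obtain k1 where k1: "k1 \<in> F" "k0 \<in> F \<Longrightarrow> k1 = k0" by blast
  define F' where "F' = F - {k1}"
  have F': "finite F'" "card F' = N" "k0 \<notin> F'" using Suc.prems k1 unfolding F'_def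
    by (auto simp: card_Diff_singleton)
  have "(\<Sum>k\<in>F. \<bar>x k\<bar> powr p) = \<bar>x k1\<bar> powr p + (\<Sum>k\<in>F'. \<bar>x k\<bar> powr p)"
    unfolding F'_def using Suc.prems(2) k1(1) by (simp add: sum.remove)
  also have "(\<Sum>k\<in>F'. \<bar>x k\<bar> powr p) = (\<Sum>k\<in>F'. \<bar>(x(k0:=0)) k\<bar> powr p)"
    using F'(3) by (intro sum.cong) auto
  also have "\<dots> \<le> (\<Sum>i<N. rearr (x(k0:=0)) i powr p)"
    by (rule Suc.IH[OF c0_upd[OF Suc.prems(1)] F'(1,2)])
  also have "\<dots> = (\<Sum>i<N. rearr x (Suc i) powr p)"
    using rearr_shift[OF Suc.prems(1) k0] by simp
  also have "\<bar>x k1\<bar> powr p \<le> rearr x 0 powr p"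
    using k0[of k1] rearr_0_eq[OF Suc.prems(1) k0] assms by (simp add: powr_mono2)
  finally have "(\<Sum>k\<in>F. \<bar>x k\<bar> powr p) \<le> rearr x 0 powr p + (\<Sum>i<N. rearr x (Suc i) powr p)"
    by simp
  also have "\<dots> = (\<Sum>i<Suc N. rearr x i powr p)" by (rule sum.lessThan_Suc_shift[symmetric])
  finally show ?case .
qed


lemma pw_le1:
  fixes a b K p :: real
  assumes "p > 0" "0 \<le> a" "0 \<le> b" "0 \<le> K" "a \<le> K * b"
  shows "a powr (1/p) \<le> K powr (1/p) * b powr (1/p)"
proof -
  have "a powr (1/p) \<le> (K * b) powr (1/p)" using assms by (intro powr_mono2) auto
  then show ?thesis by (simp add: powr_mult)
qed

lemma pw_le2:
  fixes a b C p :: real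
  assumes "p > 0" "0 \<le> a" "0 \<le> b" "0 \<le> C" "a powr (1/p) \<le> C * b powr (1/p)"
  shows "a \<le> C powr p * b"
proof -
  have "(a powr (1/p)) powr p \<le> (C * b powr (1/p)) powr p"
    using assms by (intro powr_mono2) auto
  also have "(C * b powr (1/p)) powr p = C powr p * b"
    using assms by (simp add: powr_mult powr_powr)
  also have "(a powr (1/p)) powr p = a" using assms by (simp add: powr_powr)
  finally show ?thesis .
qed

lemma nonneg_bounded_sum:
  fixes f :: "nat \<Rightarrow> real"
  assumes "\<And>n. 0 \<le> f n" "\<And>N. (\<Sum>n<N. f n) \<le> C"
  shows "summable f" "suminf f \<le> C"
proof -
  show s: "summable f" by (rule summableI_nonneg_bounded[OF assms])
  show "suminf f \<le> C" by (rule suminf_le_const[OF s assms(2)])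
qed

lemma sum_div2: "(\<Sum>m<2*(N::nat). h (m div 2)) = 2 * (\<Sum>n<N. (h n :: real))"
proof (induction N)
  case 0 then show ?case by simp
next
  case (Suc N)
  have "2 * Suc N = Suc (Suc (2*N))" by simp
  then have "(\<Sum>m<2*Suc N. h (m div 2)) = (\<Sum>m<2*N. h (m div 2)) + h ((2*N) div 2) + h (Suc (2*N) div 2)"
    by simp
  also have "\<dots> = (\<Sum>m<2*N. h (m div 2)) + 2 * h N" by simp
  finally show ?case using Suc by simp
qed

lemma add_powr_le:
  fixes a b p :: real
  assumes "0 \<le> a" "0 \<le> b" "p > 0"
  shows "(a + b) powr p \<le> 2 powr p * (a powr p + b powr p)"
proof -
  have "(a + b) powr p \<le> (2 * max a b) powr p" using assms by (intro powr_mono2) auto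
  also have "\<dots> = 2 powr p * max a b powr p" by (simp add: powr_mult)
  also have "max a b powr p \<le> a powr p + b powr p" using assms by (cases "a \<le> b") auto
  finally show ?thesis by (simp add: mult_left_mono)
qed

locale lor =
  fixes w :: seq and p :: real
  assumes p1: "1 \<le> p" and w0: "w 0 = 1" and wdec: "\<And>n. w (Suc n) \<le> w n"
    and wlim: "w \<longlonglongrightarrow> 0" and wns: "\<not> summable w"
begin

definition Nd :: "seq \<Rightarrow> real" where
  "Nd x = (\<Sum>n. w n * rearr x n powr p)"

definition Lp :: "seq \<Rightarrow> real" where
  "Lp x = (\<Sum>k. \<bar>x k\<bar> powr p)"

lemma p0: "p > 0" using p1 by simp

lemma w_decseq: "decseq w" using wdec by (simp add: decseq_SucI)

lemma w_nonneg: "0 \<le> w n" using decseq_ge[OF w_decseq wlim] by simp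

lemma w_anti: "m \<le> n \<Longrightarrow> w n \<le> w m" using w_decseq by (simp add: decseq_def)

lemma w_le1: "w n \<le> 1" using w_anti[of 0 n] w0 by simp

lemma lnorm: "lorentz_norm w p x = Nd x powr (1/p)"
  unfolding lorentz_norm_def Nd_def by simp

lemma lpnorm: "lp_norm p x = Lp x powr (1/p)"
  unfolding lp_norm_def Lp_def by simp

lemma lor_iff: "x \<in> lorentz_space w p \<longleftrightarrow> x \<in> c0 \<and> summable (\<lambda>n. w n * rearr x n powr p)"
  unfolding lorentz_space_def by simp

lemma lp_iff: "x \<in> lp_space p \<longleftrightarrow> summable (\<lambda>k. \<bar>x k\<bar> powr p)"
  unfolding lp_space_def by simp

lemma term_nonneg: "0 \<le> w n * rearr x n powr p"
  using w_nonneg by simp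

lemma Nd_nonneg: "x \<in> lorentz_space w p \<Longrightarrow> 0 \<le> Nd x"
  unfolding Nd_def lor_iff by (auto intro!: suminf_nonneg simp: term_nonneg)

lemma Lp_nonneg: "x \<in> lp_space p \<Longrightarrow> 0 \<le> Lp x"
  unfolding Lp_def lp_iff by (auto intro!: suminf_nonneg)

lemma lnorm_nonneg: "0 \<le> lorentz_norm w p x" unfolding lnorm by simp

lemma Nd_ge_abs: "x \<in> lorentz_space w p \<Longrightarrow> \<bar>x k\<bar> powr p \<le> Nd x"
proof -
  assume x: "x \<in> lorentz_space w p"
  then have s: "summable (\<lambda>n. w n * rearr x n powr p)" and c: "x \<in> c0" by (auto simp: lor_iff)
  have "\<bar>x k\<bar> powr p \<le> w 0 * rearr x 0 powr p"
    using w0 rearr_0_ge[OF c0_bnd[OF c], of k] p0 by (simp add: powr_mono2)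
  also have "\<dots> = (\<Sum>n\<in>{0}. w n * rearr x n powr p)" by simp
  also have "\<dots> \<le> Nd x" unfolding Nd_def by (rule sum_le_suminf[OF s]) (auto simp: term_nonneg)
  finally show ?thesis .
qed

lemma Nd_zero: "x \<in> lorentz_space w p \<Longrightarrow> Nd x = 0 \<Longrightarrow> x = (\<lambda>k. 0)"
proof
  fix k assume "x \<in> lorentz_space w p" "Nd x = 0"
  then have "\<bar>x k\<bar> powr p \<le> 0" using Nd_ge_abs by fastforce
  then show "x k = 0" by simp
qed

lemma zero_lor: "(\<lambda>k. 0) \<in> lorentz_space w p" and Nd_0: "Nd (\<lambda>k. 0) = 0"
proof -
  have b: "bnd (\<lambda>k. 0::real)" unfolding bnd_def by auto
  have r: "rearr (\<lambda>k. 0) n = 0" for n by (rule rearr_finsupp[OF b, of "{}"]) auto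
  show "(\<lambda>k. 0) \<in> lorentz_space w p" unfolding lor_iff c0_def by (simp add: r)
  show "Nd (\<lambda>k. 0) = 0" unfolding Nd_def by (simp add: r)
qed

lemma lor_mono:
  assumes y: "y \<in> lorentz_space w p" and x: "x \<in> c0" and le: "\<And>k. \<bar>x k\<bar> \<le> \<bar>y k\<bar>"
  shows "x \<in> lorentz_space w p" "Nd x \<le> Nd y"
proof -
  have sy: "summable (\<lambda>n. w n * rearr y n powr p)" and cy: "y \<in> c0" using y by (auto simp: lor_iff)
  have le2: "w n * rearr x n powr p \<le> w n * rearr y n powr p" for n
    using rearr_mono_fun[OF c0_bnd[OF cy] le, of n] rearr_nonneg[OF c0_bnd[OF x], of n] p0 w_nonneg[of n]
    by (intro mult_left_mono powr_mono2) auto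
  have sx: "summable (\<lambda>n. w n * rearr x n powr p)"
    by (rule summable_comparison_test'[OF sy, of 0]) (use le2 term_nonneg in auto)
  show "x \<in> lorentz_space w p" using sx x by (simp add: lor_iff)
  show "Nd x \<le> Nd y" unfolding Nd_def by (rule suminf_le[OF le2 sx sy])
qed

lemma c0_scale: "x \<in> c0 \<Longrightarrow> (\<lambda>k. c * x k) \<in> c0"
  unfolding c0_def using tendsto_mult_left[of x 0 sequentially c] by simp

lemma c0_add: "x \<in> c0 \<Longrightarrow> y \<in> c0 \<Longrightarrow> (\<lambda>k. x k + y k) \<in> c0"
  unfolding c0_def using tendsto_add[of x 0 sequentially y 0] by simp

lemma lor_scale:
  assumes x: "x \<in> lorentz_space w p"
  shows "(\<lambda>k. c * x k) \<in> lorentz_space w p" "Nd (\<lambda>k. c * x k) = \<bar>c\<bar> powr p * Nd x"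
proof -
  have sx: "summable (\<lambda>n. w n * rearr x n powr p)" and cx: "x \<in> c0" using x by (auto simp: lor_iff)
  have eq: "w n * rearr (\<lambda>k. c * x k) n powr p = \<bar>c\<bar> powr p * (w n * rearr x n powr p)" for n
    using rearr_scale[OF c0_bnd[OF cx], of c n] rearr_nonneg[OF c0_bnd[OF cx], of n]
    by (simp add: powr_mult)
  show "(\<lambda>k. c * x k) \<in> lorentz_space w p"
    using c0_scale[OF cx] summable_mult[OF sx, of "\<bar>c\<bar> powr p"] by (simp add: lor_iff eq)
  show "Nd (\<lambda>k. c * x k) = \<bar>c\<bar> powr p * Nd x"
    unfolding Nd_def eq using suminf_mult[OF sx] by simp
qed

lemma lor_add:
  assumes x: "x \<in> lorentz_space w p" and y: "y \<in> lorentz_space w p"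
  shows "(\<lambda>k. x k + y k) \<in> lorentz_space w p" "Nd (\<lambda>k. x k + y k) \<le> 4 powr p * (Nd x + Nd y)"
proof -
  have sx: "summable (\<lambda>n. w n * rearr x n powr p)" and cx: "x \<in> c0" using x by (auto simp: lor_iff)
  have sy: "summable (\<lambda>n. w n * rearr y n powr p)" and cy: "y \<in> c0" using y by (auto simp: lor_iff)
  define z where "z = (\<lambda>k. x k + y k)"
  have bx: "bnd x" and by': "bnd y" using cx cy by (auto intro: c0_bnd)
  have bz: "bnd z" unfolding z_def by (rule bnd_add[OF bx by'])
  define h where "h n = 2 powr p * (w n * rearr x n powr p + w n * rearr y n powr p)" for n
  have tle: "w m * rearr z m powr p \<le> h (m div 2)" for m
  proof -
    have "rearr z m \<le> rearr z (m div 2 + m div 2)" by (rule rearr_antimono[OF bz]) auto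
    also have "\<dots> \<le> rearr x (m div 2) + rearr y (m div 2)" unfolding z_def by (rule rearr_add[OF bx by'])
    finally have r: "rearr z m \<le> rearr x (m div 2) + rearr y (m div 2)" .
    have "w m * rearr z m powr p \<le> w (m div 2) * (rearr x (m div 2) + rearr y (m div 2)) powr p"
      using r w_anti[of "m div 2" m] w_nonneg[of m] rearr_nonneg[OF bz, of m] p0
        rearr_nonneg[OF bx, of "m div 2"] rearr_nonneg[OF by', of "m div 2"]
      by (intro mult_mono powr_mono2) auto
    also have "\<dots> \<le> w (m div 2) * (2 powr p * (rearr x (m div 2) powr p + rearr y (m div 2) powr p))"
      using w_nonneg rearr_nonneg[OF bx] rearr_nonneg[OF by'] p0
      by (intro mult_left_mono add_powr_le) auto
    also have "\<dots> = h (m div 2)" unfolding h_def by (simp add: algebra_simps)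
    finally show ?thesis .
  qed
  have hn: "0 \<le> h n" for n unfolding h_def using term_nonneg[of n x] term_nonneg[of n y] by simp
  have sh: "summable h" unfolding h_def by (intro summable_mult summable_add sx sy)
  have "(\<Sum>m<N. w m * rearr z m powr p) \<le> 2 * suminf h" for N
  proof -
    have "(\<Sum>m<N. w m * rearr z m powr p) \<le> (\<Sum>m<2*N. h (m div 2))"
    proof -
      have "(\<Sum>m<N. w m * rearr z m powr p) \<le> (\<Sum>m<N. h (m div 2))" by (intro sum_mono tle)
      also have "\<dots> \<le> (\<Sum>m<2*N. h (m div 2))" by (intro sum_mono2) (auto simp: hn)
      finally show ?thesis .
    qed
    also have "\<dots> = 2 * (\<Sum>n<N. h n)" by (rule sum_div2)
    also have "\<dots> \<le> 2 * suminf h" using sum_le_suminf[OF sh, of "{..<N}"] hn by simp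
    finally show ?thesis .
  qed
  then have res: "summable (\<lambda>m. w m * rearr z m powr p)" "Nd z \<le> 2 * suminf h"
    using nonneg_bounded_sum[of "\<lambda>m. w m * rearr z m powr p" "2 * suminf h"] term_nonneg
    unfolding Nd_def by auto
  show "(\<lambda>k. x k + y k) \<in> lorentz_space w p" using res c0_add[OF cx cy] unfolding z_def lor_iff by simp
  have "suminf h = 2 powr p * (Nd x + Nd y)" unfolding h_def Nd_def
    using suminf_mult[OF summable_add[OF sx sy], of "2 powr p"] suminf_add[OF sx sy] by simp
  then have "Nd z \<le> 2 * 2 powr p * (Nd x + Nd y)" using res by simp
  also have "\<dots> \<le> 4 powr p * (Nd x + Nd y)"
  proof -
    have "2 * 2 powr p \<le> 2 powr p * 2 powr p" using p1
      by (intro mult_right_mono) (auto intro: order_trans[OF _ powr_mono[of 1 p 2]])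
    also have "\<dots> = 4 powr p" by (simp add: powr_mult[symmetric])
    finally show ?thesis using Nd_nonneg[OF x] Nd_nonneg[OF y] by (intro mult_right_mono) auto
  qed
  finally show "Nd (\<lambda>k. x k + y k) \<le> 4 powr p * (Nd x + Nd y)" unfolding z_def .
qed

lemma lp_c0: "x \<in> lp_space p \<Longrightarrow> x \<in> c0"
proof -
  assume "x \<in> lp_space p"
  then have "(\<lambda>k. \<bar>x k\<bar> powr p) \<longlonglongrightarrow> 0" by (simp add: lp_iff summable_LIMSEQ_zero)
  then have "(\<lambda>k. (\<bar>x k\<bar> powr p) powr (1/p)) \<longlonglongrightarrow> 0"
    by (rule tendsto_zero_powrI[OF _ tendsto_const]) (use p0 in auto)
  then have "(\<lambda>k. \<bar>x k\<bar>) \<longlonglongrightarrow> 0" using p0 by (simp add: powr_powr)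
  then show "x \<in> c0" unfolding c0_def by (simp add: tendsto_rabs_zero_iff)
qed

lemma lp_sub:
  assumes x: "x \<in> lp_space p"
  shows "x \<in> lorentz_space w p" "Nd x \<le> Lp x"
proof -
  have c: "x \<in> c0" by (rule lp_c0[OF x])
  have s: "summable (\<lambda>k. \<bar>x k\<bar> powr p)" using x by (simp add: lp_iff)
  have "(\<Sum>n<N. w n * rearr x n powr p) \<le> Lp x" for N
  proof -
    have "(\<Sum>n<N. w n * rearr x n powr p) \<le> (\<Sum>n<N. rearr x n powr p)"
      using w_le1 w_nonneg by (intro sum_mono mult_left_le_one_le) auto
    also have "\<dots> \<le> Lp x" unfolding Lp_def by (rule sum_rearr_le_lp[OF p0 c s])
    finally show ?thesis .
  qed
  then have "summable (\<lambda>n. w n * rearr x n powr p)" "Nd x \<le> Lp x"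
    using nonneg_bounded_sum[of "\<lambda>n. w n * rearr x n powr p" "Lp x"] term_nonneg unfolding Nd_def by auto
  then show "x \<in> lorentz_space w p" "Nd x \<le> Lp x" using c by (auto simp: lor_iff)
qed

end


definition lin_on :: "seq set \<Rightarrow> (seq \<Rightarrow> seq) \<Rightarrow> bool" where
  "lin_on X T \<longleftrightarrow> (\<forall>x\<in>X. \<forall>y\<in>X. \<forall>a b::real. T (\<lambda>k. a * x k + b * y k) = (\<lambda>k. a * T x k + b * T y k))"

lemma bop_I:
  assumes "p > 0" "\<And>x. x \<in> X \<Longrightarrow> T x \<in> Y" "lin_on X T" "\<And>x. x \<in> X \<Longrightarrow> 0 \<le> FX x"
    "\<And>x. x \<in> X \<Longrightarrow> 0 \<le> FY (T x)" "K \<ge> 0" "\<And>x. x \<in> X \<Longrightarrow> FY (T x) \<le> K * FX x"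
  shows "bounded_op X (\<lambda>x. FX x powr (1/p)) Y (\<lambda>y. FY y powr (1/p)) T"
  unfolding bounded_op_def
proof (intro conjI)
  show "\<forall>x\<in>X. T x \<in> Y" using assms by auto
  show "\<forall>x\<in>X. \<forall>y\<in>X. \<forall>a b. T (\<lambda>k. a * x k + b * y k) = (\<lambda>k. a * T x k + b * T y k)"
    using assms(3) unfolding lin_on_def by blast
  show "\<exists>C. \<forall>x\<in>X. FY (T x) powr (1 / p) \<le> C * FX x powr (1 / p)"
    using assms by (intro exI[of _ "K powr (1/p)"]) (auto intro: pw_le1)
qed

lemma bop_D:
  assumes b: "bounded_op X (\<lambda>x. FX x powr (1/p)) Y (\<lambda>y. FY y powr (1/p)) T" and p: "p > 0"
    and n1: "\<And>x. x \<in> X \<Longrightarrow> 0 \<le> FX x" and n2: "\<And>y. y \<in> Y \<Longrightarrow> 0 \<le> FY y"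
  shows "\<And>x. x \<in> X \<Longrightarrow> T x \<in> Y" "lin_on X T" "\<exists>K\<ge>0. \<forall>x\<in>X. FY (T x) \<le> K * FX x"
proof -
  show m: "\<And>x. x \<in> X \<Longrightarrow> T x \<in> Y" using b unfolding bounded_op_def by auto
  show "lin_on X T" using b unfolding bounded_op_def lin_on_def by auto
  obtain C where C: "\<forall>x\<in>X. FY (T x) powr (1/p) \<le> C * FX x powr (1/p)"
    using b unfolding bounded_op_def by auto
  have "\<forall>x\<in>X. FY (T x) \<le> (max C 0) powr p * FX x"
  proof
    fix x assume x: "x \<in> X"
    have "FY (T x) powr (1/p) \<le> max C 0 * FX x powr (1/p)"
      using C x by (meson max.cobounded1 mult_right_mono order_trans powr_ge_zero)
    then show "FY (T x) \<le> (max C 0) powr p * FX x"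
      using n1[OF x] n2[OF m[OF x]] p by (intro pw_le2) auto
  qed
  then show "\<exists>K\<ge>0. \<forall>x\<in>X. FY (T x) \<le> K * FX x" by (intro exI[of _ "(max C 0) powr p"]) auto
qed

lemma lin_on_zero: "lin_on X T \<Longrightarrow> x \<in> X \<Longrightarrow> T (\<lambda>k. 0) = (\<lambda>k. 0)"
  unfolding lin_on_def by (drule bspec, assumption, drule bspec, assumption)
    (drule spec[of _ 0], drule spec[of _ 0], simp)

lemma lin_on_scale: "lin_on X T \<Longrightarrow> x \<in> X \<Longrightarrow> T (\<lambda>k. c * x k) = (\<lambda>k. c * T x k)"
  unfolding lin_on_def by (drule bspec, assumption, drule bspec, assumption)
    (drule spec[of _ c], drule spec[of _ 0], simp)

lemma lin_on_diff: "lin_on X T \<Longrightarrow> x \<in> X \<Longrightarrow> y \<in> X \<Longrightarrow> T (\<lambda>k. x k - y k) = (\<lambda>k. T x k - T y k)"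
  unfolding lin_on_def by (drule bspec, assumption, drule bspec, assumption)
    (drule spec[of _ 1], drule spec[of _ "-1"], simp)

lemma lin_on_mono: "lin_on X T \<Longrightarrow> Y \<subseteq> X \<Longrightarrow> lin_on Y T"
  unfolding lin_on_def by blast

context lor
begin

lemma lnorm_fun: "lorentz_norm w p = (\<lambda>x. Nd x powr (1/p))" using lnorm by auto
lemma lpnorm_fun: "lp_norm p = (\<lambda>x. Lp x powr (1/p))" using lpnorm by auto

lemma Ld_D:
  assumes "T \<in> Ld w p"
  shows "\<And>x. x \<in> lorentz_space w p \<Longrightarrow> T x \<in> lorentz_space w p" "lin_on (lorentz_space w p) T"
    "\<exists>K\<ge>0. \<forall>x\<in>lorentz_space w p. Nd (T x) \<le> K * Nd x"
  using bop_D[of "lorentz_space w p" Nd p "lorentz_space w p" Nd T] assms p0 Nd_nonneg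
  unfolding Ld_def lnorm_fun by auto

lemma Ld_I:
  assumes "\<And>x. x \<in> lorentz_space w p \<Longrightarrow> T x \<in> lorentz_space w p" "lin_on (lorentz_space w p) T"
    "K \<ge> 0" "\<And>x. x \<in> lorentz_space w p \<Longrightarrow> Nd (T x) \<le> K * Nd x"
  shows "T \<in> Ld w p"
  unfolding Ld_def lnorm_fun using assms p0 Nd_nonneg by (auto intro!: bop_I)

lemma DL_D:
  assumes "bounded_op (lorentz_space w p) (lorentz_norm w p) (lp_space p) (lp_norm p) B"
  shows "\<And>x. x \<in> lorentz_space w p \<Longrightarrow> B x \<in> lp_space p" "lin_on (lorentz_space w p) B"
    "\<exists>K\<ge>0. \<forall>x\<in>lorentz_space w p. Lp (B x) \<le> K * Nd x"
  using bop_D[of "lorentz_space w p" Nd p "lp_space p" Lp B] assms p0 Nd_nonneg Lp_nonneg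
  unfolding lnorm_fun lpnorm_fun by auto

lemma DL_I:
  assumes "\<And>x. x \<in> lorentz_space w p \<Longrightarrow> B x \<in> lp_space p" "lin_on (lorentz_space w p) B"
    "K \<ge> 0" "\<And>x. x \<in> lorentz_space w p \<Longrightarrow> Lp (B x) \<le> K * Nd x"
  shows "bounded_op (lorentz_space w p) (lorentz_norm w p) (lp_space p) (lp_norm p) B"
  unfolding lnorm_fun lpnorm_fun using assms p0 Nd_nonneg Lp_nonneg by (auto intro!: bop_I)

lemma LD_I:
  assumes "\<And>x. x \<in> lp_space p \<Longrightarrow> B x \<in> lorentz_space w p" "lin_on (lp_space p) B"
    "K \<ge> 0" "\<And>x. x \<in> lp_space p \<Longrightarrow> Nd (B x) \<le> K * Lp x"
  shows "bounded_op (lp_space p) (lp_norm p) (lorentz_space w p) (lorentz_norm w p) B"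
  unfolding lnorm_fun lpnorm_fun using assms p0 Nd_nonneg Lp_nonneg by (auto intro!: bop_I)

lemma part_d: "J_j w p \<subseteq> J_lp w p"
proof
  fix S assume "S \<in> J_j w p"
  then obtain A B where S: "S \<in> Ld w p" and A: "A \<in> Ld w p"
    and B: "bounded_op (lorentz_space w p) (lorentz_norm w p) (lp_space p) (lp_norm p) B"
    and eq: "\<forall>x\<in>lorentz_space w p. S x = A (jmap (B x))" unfolding J_j_def by auto
  obtain K where K: "K \<ge> 0" "\<forall>x\<in>lorentz_space w p. Nd (A x) \<le> K * Nd x" using Ld_D(3)[OF A] by auto
  have "bounded_op (lp_space p) (lp_norm p) (lorentz_space w p) (lorentz_norm w p) A"
  proof (rule LD_I[where K=K])
    show "\<And>x. x \<in> lp_space p \<Longrightarrow> A x \<in> lorentz_space w p" using Ld_D(1)[OF A] lp_sub(1) by auto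
    show "lin_on (lp_space p) A" by (rule lin_on_mono[OF Ld_D(2)[OF A]]) (use lp_sub(1) in auto)
    show "K \<ge> 0" by fact
    fix x assume x: "x \<in> lp_space p"
    have "Nd (A x) \<le> K * Nd x" using K lp_sub(1)[OF x] by auto
    also have "\<dots> \<le> K * Lp x" using K(1) lp_sub(2)[OF x] by (rule mult_left_mono[rotated])
    finally show "Nd (A x) \<le> K * Lp x" .
  qed
  then show "S \<in> J_lp w p" unfolding J_lp_def using S B eq by (auto simp: jmap_def)
qed

end


context lor
begin

definition PN :: "nat \<Rightarrow> seq \<Rightarrow> seq" where "PN N z = (\<lambda>k. if k < N then z k else 0)"
definition QN :: "nat \<Rightarrow> seq \<Rightarrow> seq" where "QN N z = (\<lambda>k. if k < N then 0 else z k)"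

lemma c0_ev: "x \<in> c0 \<Longrightarrow> (\<And>k. k \<ge> N \<Longrightarrow> y k = x k \<or> y k = 0) \<Longrightarrow> y \<in> c0"
proof -
  assume x: "x \<in> c0" and e: "\<And>k. k \<ge> N \<Longrightarrow> y k = x k \<or> y k = 0"
  have lim: "(\<lambda>k. \<bar>x k\<bar>) \<longlonglongrightarrow> 0" using x unfolding c0_def by (simp add: tendsto_rabs_zero_iff)
  have ev: "\<forall>\<^sub>F k in sequentially. norm (y k) \<le> \<bar>x k\<bar>"
    unfolding eventually_sequentially
  proof (intro exI[of _ N] allI impI)
    fix k assume "k \<ge> N"
    then show "norm (y k) \<le> \<bar>x k\<bar>" using e[of k] by auto
  qed
  have "y \<longlonglongrightarrow> 0" by (rule Lim_null_comparison[OF ev lim])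
  then show "y \<in> c0" unfolding c0_def by simp
qed

lemma PN_lor: "z \<in> lorentz_space w p \<Longrightarrow> PN N z \<in> lorentz_space w p \<and> Nd (PN N z) \<le> Nd z"
proof -
  assume z: "z \<in> lorentz_space w p"
  have cz: "z \<in> c0" using z by (simp add: lor_iff)
  have c: "PN N z \<in> c0" by (rule c0_ev[OF cz, of N]) (auto simp: PN_def)
  show ?thesis using lor_mono[OF z c] by (auto simp: PN_def)
qed

lemma QN_lor: "z \<in> lorentz_space w p \<Longrightarrow> QN N z \<in> lorentz_space w p \<and> Nd (QN N z) \<le> Nd z"
proof -
  assume z: "z \<in> lorentz_space w p"
  have cz: "z \<in> c0" using z by (simp add: lor_iff)
  have c: "QN N z \<in> c0" by (rule c0_ev[OF cz, of 0]) (auto simp: QN_def)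
  show ?thesis using lor_mono[OF z c] by (auto simp: QN_def)
qed

lemma PN_lp: "z \<in> lorentz_space w p \<Longrightarrow> PN N z \<in> lp_space p \<and> Lp (PN N z) \<le> real N * Nd z"
proof -
  assume z: "z \<in> lorentz_space w p"
  have fin: "\<And>k. k \<notin> {..<N} \<Longrightarrow> \<bar>PN N z k\<bar> powr p = 0" by (auto simp: PN_def)
  have "summable (\<lambda>k. \<bar>PN N z k\<bar> powr p)"
    by (rule summable_finite[of "{..<N}"]) (use fin in auto)
  moreover have "Lp (PN N z) = (\<Sum>k<N. \<bar>z k\<bar> powr p)"
    unfolding Lp_def by (subst suminf_finite[of "{..<N}"]) (use fin in \<open>auto simp: PN_def\<close>)
  moreover have "(\<Sum>k<N. \<bar>z k\<bar> powr p) \<le> (\<Sum>k<N. Nd z)" by (intro sum_mono Nd_ge_abs[OF z])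
  ultimately show ?thesis by (simp add: lp_iff)
qed

lemma Q_tail:
  assumes y: "y \<in> lorentz_space w p"
  shows "(\<lambda>N. Nd (QN N y)) \<longlonglongrightarrow> 0"
proof (rule LIMSEQ_I)
  fix r :: real assume r: "r > 0"
  have sy: "summable (\<lambda>n. w n * rearr y n powr p)" and cy: "y \<in> c0" using y by (auto simp: lor_iff)
  obtain M where M: "\<And>n. n \<ge> M \<Longrightarrow> norm (\<Sum>i. w (i + n) * rearr y (i + n) powr p) < r/2"
    using suminf_exist_split[of "r/2", OF _ sy] r by auto
  define \<delta> where "\<delta> = (r / (2 * (real M + 1))) powr (1/p)"
  have dpos: "\<delta> > 0" unfolding \<delta>_def using r by simp
  have dp: "\<delta> powr p = r / (2 * (real M + 1))" unfolding \<delta>_def using r p0 by (simp add: powr_powr)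
  have "(\<lambda>k. \<bar>y k\<bar>) \<longlonglongrightarrow> 0" using cy unfolding c0_def by (simp add: tendsto_rabs_zero_iff)
  then obtain N0 where N0: "\<And>k. k \<ge> N0 \<Longrightarrow> \<bar>y k\<bar> < \<delta>"
    using dpos by (auto simp: LIMSEQ_iff)
  show "\<exists>N0. \<forall>N\<ge>N0. norm (Nd (QN N y) - 0) < r"
  proof (intro exI allI impI)
    fix N assume N: "N \<ge> N0"
    have q: "QN N y \<in> lorentz_space w p" using QN_lor[OF y] by auto
    have bq: "bnd (QN N y)" using q by (auto simp: lor_iff intro: c0_bnd)
    have by': "bnd y" using cy by (rule c0_bnd)
    define g where "g n = w n * rearr (QN N y) n powr p" for n
    have sg: "summable g" using q unfolding g_def by (simp add: lor_iff)
    have "Nd (QN N y) = (\<Sum>n. g (n + M)) + (\<Sum>i<M. g i)" unfolding Nd_def g_def[symmetric]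
      by (rule suminf_split_initial_segment[OF sg])
    also have "(\<Sum>i<M. g i) \<le> (\<Sum>i<M. \<delta> powr p)"
    proof (intro sum_mono)
      fix i
      have "rearr (QN N y) i \<le> \<delta>"
        by (rule rearr_bound[OF bq]) (use N0 N dpos in \<open>auto simp: QN_def less_imp_le\<close>)
      then have "rearr (QN N y) i powr p \<le> \<delta> powr p"
        using p0 rearr_nonneg[OF bq] by (intro powr_mono2) auto
      then show "g i \<le> \<delta> powr p" unfolding g_def using w_le1[of i] w_nonneg[of i]
        by (meson mult_left_le_one_le order_trans powr_ge_zero)
    qed
    also have "(\<Sum>n. g (n + M)) \<le> (\<Sum>n. w (n + M) * rearr y (n + M) powr p)"
    proof (rule suminf_le)
      fix n show "g (n + M) \<le> w (n + M) * rearr y (n + M) powr p"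
        unfolding g_def using rearr_mono_fun[OF by', of "QN N y" "n + M"] rearr_nonneg[OF bq, of "n+M"] p0
        by (intro mult_left_mono powr_mono2 w_nonneg) (auto simp: QN_def)
      show "summable (\<lambda>n. g (n + M))" by (rule summable_ignore_initial_segment[OF sg])
      show "summable (\<lambda>n. w (n + M) * rearr y (n + M) powr p)"
        by (rule summable_ignore_initial_segment[OF sy])
    qed
    also have "(\<Sum>n. w (n + M) * rearr y (n + M) powr p) < r/2" using M[of M] by simp
    also have "(\<Sum>i<M. \<delta> powr p) < r/2" using r by (simp add: dp field_simps)
    finally have "Nd (QN N y) < r" by simp
    then show "norm (Nd (QN N y) - 0) < r" using Nd_nonneg[OF q] by simp
  qed
qed

lemma Nd_of_lnorm: "(\<lambda>i. lorentz_norm w p (xs i)) \<longlonglongrightarrow> 0 \<Longrightarrow> (\<lambda>i. Nd (xs i)) \<longlonglongrightarrow> 0"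
proof -
  assume a: "(\<lambda>i. lorentz_norm w p (xs i)) \<longlonglongrightarrow> 0"
  have "(\<lambda>i. (lorentz_norm w p (xs i)) powr p) \<longlonglongrightarrow> 0"
    by (rule tendsto_zero_powrI[OF a tendsto_const]) (use p0 lnorm_nonneg in auto)
  moreover have "(lorentz_norm w p (xs i)) powr p = \<bar>Nd (xs i)\<bar>" for i
    unfolding lnorm using p0 by (simp add: powr_powr)
  ultimately show ?thesis by (simp add: tendsto_rabs_zero_iff)
qed

lemma part_a: "compact_ops w p \<subseteq> op_closure w p (J_j w p)"
proof
  fix T assume Tc: "T \<in> compact_ops w p"
  then have T: "T \<in> Ld w p" unfolding compact_ops_def by auto
  note Tin = Ld_D(1)[OF T] and Tlin = Ld_D(2)[OF T]
  obtain KT where KT: "KT \<ge> 0" "\<And>x. x \<in> lorentz_space w p \<Longrightarrow> Nd (T x) \<le> KT * Nd x"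
    using Ld_D(3)[OF T] by auto
  have unif: "\<exists>N. \<forall>x\<in>lorentz_space w p. Nd x \<le> 1 \<longrightarrow> Nd (QN N (T x)) \<le> \<eta>" if eta: "\<eta> > 0" for \<eta>
  proof (rule ccontr)
    assume "\<not> ?thesis"
    then have "\<forall>N. \<exists>x. x \<in> lorentz_space w p \<and> Nd x \<le> 1 \<and> Nd (QN N (T x)) > \<eta>" by (auto simp: not_le)
    then obtain xs where xs: "\<And>N. xs N \<in> lorentz_space w p" "\<And>N. Nd (xs N) \<le> 1"
      "\<And>N. Nd (QN N (T (xs N))) > \<eta>" by metis
    have "\<forall>i. xs i \<in> lorentz_space w p \<and> lorentz_norm w p (xs i) \<le> 1"
    proof
      fix i
      have "Nd (xs i) powr (1/p) \<le> 1 powr (1/p)"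
        using xs(1,2) Nd_nonneg p0 by (intro powr_mono2) auto
      then show "xs i \<in> lorentz_space w p \<and> lorentz_norm w p (xs i) \<le> 1"
        using xs(1) unfolding lnorm by simp
    qed
    then obtain r y where r: "strict_mono r" and y: "y \<in> lorentz_space w p"
      and lim: "(\<lambda>i. lorentz_norm w p (\<lambda>k. T (xs (r i)) k - y k)) \<longlonglongrightarrow> 0"
      using Tc unfolding compact_ops_def by blast
    have l1: "(\<lambda>i. Nd (\<lambda>k. T (xs (r i)) k - y k)) \<longlonglongrightarrow> 0" by (rule Nd_of_lnorm[OF lim])
    have l2: "(\<lambda>i. Nd (QN (r i) y)) \<longlonglongrightarrow> 0"
      using LIMSEQ_subseq_LIMSEQ[OF Q_tail[OF y] r] by (simp add: comp_def)
    have l3: "(\<lambda>i. 4 powr p * (Nd (\<lambda>k. T (xs (r i)) k - y k) + Nd (QN (r i) y))) \<longlonglongrightarrow> 0"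
      using tendsto_mult_right_zero[OF tendsto_add_zero[OF l1 l2]] by simp
    then obtain no where no: "\<forall>n\<ge>no. \<bar>4 powr p * (Nd (\<lambda>k. T (xs (r n)) k - y k) + Nd (QN (r n) y))\<bar> < \<eta>"
      using eta by (auto simp: LIMSEQ_iff dest!: spec[of _ \<eta>])
    define i where "i = no"
    have i: "4 powr p * (Nd (\<lambda>k. T (xs (r i)) k - y k) + Nd (QN (r i) y)) < \<eta>"
      using no unfolding i_def by auto
    define u where "u = (\<lambda>k. T (xs (r i)) k - y k)"
    have u: "u \<in> lorentz_space w p" unfolding u_def
      using lor_add(1)[OF Tin[OF xs(1)] lor_scale(1)[OF y, of "-1"]] by simp
    have "QN (r i) (T (xs (r i))) = (\<lambda>k. QN (r i) u k + QN (r i) y k)"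
      unfolding u_def QN_def by auto
    then have "Nd (QN (r i) (T (xs (r i)))) \<le> 4 powr p * (Nd (QN (r i) u) + Nd (QN (r i) y))"
      using lor_add(2)[OF conjunct1[OF QN_lor[OF u]] conjunct1[OF QN_lor[OF y]]] by simp
    also have "\<dots> \<le> 4 powr p * (Nd u + Nd (QN (r i) y))"
      using QN_lor[OF u] by (intro mult_left_mono) auto
    also have "\<dots> < \<eta>" using i unfolding u_def .
    finally show False using xs(3)[of "r i"] by simp
  qed
  show "T \<in> op_closure w p (J_j w p)" unfolding op_closure_def
  proof (intro CollectI conjI allI impI T)
    fix \<epsilon> :: real assume eps: "\<epsilon> > 0"
    obtain N where N: "\<And>x. x \<in> lorentz_space w p \<Longrightarrow> Nd x \<le> 1 \<Longrightarrow> Nd (QN N (T x)) \<le> \<epsilon> powr p"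
      using unif[of "\<epsilon> powr p"] eps by auto
    have N2: "Nd (QN N (T x)) \<le> \<epsilon> powr p * Nd x" if x: "x \<in> lorentz_space w p" for x
    proof (cases "Nd x = 0")
      case True
      then have "x = (\<lambda>k. 0)" by (rule Nd_zero[OF x])
      then have "T x = (\<lambda>k. 0)" using lin_on_zero[OF Tlin zero_lor] by simp
      then show ?thesis using True by (simp add: QN_def Nd_0)
    next
      case False
      then have pos: "Nd x > 0" using Nd_nonneg[OF x] by simp
      define c where "c = Nd x powr (-1/p)"
      have cpos: "c > 0" unfolding c_def using pos by simp
      have cp: "c powr p = 1 / Nd x"
      proof -
        have "c powr p = Nd x powr ((-1/p) * p)" unfolding c_def by (rule powr_powr)
        also have "(-1/p) * p = - 1" using p0 by simp
        also have "Nd x powr (- 1) = inverse (Nd x powr 1)" by (rule powr_minus)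
        finally show ?thesis using pos by (simp add: inverse_eq_divide)
      qed
      have x': "(\<lambda>k. c * x k) \<in> lorentz_space w p" "Nd (\<lambda>k. c * x k) = 1"
        using lor_scale[OF x, of c] cpos cp pos by auto
      have "Nd (QN N (T (\<lambda>k. c * x k))) \<le> \<epsilon> powr p" using N[OF x'(1)] x'(2) by simp
      moreover have "QN N (T (\<lambda>k. c * x k)) = (\<lambda>k. c * QN N (T x) k)"
        unfolding lin_on_scale[OF Tlin x] QN_def by auto
      moreover have "Nd (\<lambda>k. c * QN N (T x) k) = c powr p * Nd (QN N (T x))"
        using lor_scale(2)[OF conjunct1[OF QN_lor[OF Tin[OF x]]], of c] cpos by simp
      ultimately have "Nd (QN N (T x)) / Nd x \<le> \<epsilon> powr p" using cp by simp
      then show ?thesis using pos by (simp add: divide_le_eq)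
    qed
    define T' where "T' = (\<lambda>x. PN N (T x))"
    have T'lin: "lin_on (lorentz_space w p) T'"
      using Tlin unfolding lin_on_def T'_def PN_def by auto
    have T'Ld: "T' \<in> Ld w p"
    proof (rule Ld_I[OF _ T'lin KT(1)])
      fix x assume x: "x \<in> lorentz_space w p"
      show "T' x \<in> lorentz_space w p" unfolding T'_def using PN_lor[OF Tin[OF x]] by auto
      show "Nd (T' x) \<le> KT * Nd x" unfolding T'_def using PN_lor[OF Tin[OF x], of N] KT(2)[OF x] by linarith
    qed
    have idLd: "(\<lambda>x. x) \<in> Ld w p"
      by (rule Ld_I[of _ 1]) (auto simp: lin_on_def)
    have Bop: "bounded_op (lorentz_space w p) (lorentz_norm w p) (lp_space p) (lp_norm p) T'"
    proof (rule DL_I[OF _ T'lin, of "real N * KT"])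
      fix x assume x: "x \<in> lorentz_space w p"
      show "T' x \<in> lp_space p" unfolding T'_def using PN_lp[OF Tin[OF x]] by auto
      have "Lp (T' x) \<le> real N * Nd (T x)" unfolding T'_def using PN_lp[OF Tin[OF x]] by auto
      also have "\<dots> \<le> real N * (KT * Nd x)" using KT(2)[OF x] by (intro mult_left_mono) auto
      finally show "Lp (T' x) \<le> real N * KT * Nd x" by simp
    qed (use KT in auto)
    have "T' \<in> J_j w p" unfolding J_j_def
      apply (rule CollectI, rule conjI[OF T'Ld])
      apply (rule exI[of _ "\<lambda>x. x"], rule exI[of _ T'])
      using idLd Bop by (simp add: jmap_def)
    moreover have "lorentz_norm w p (\<lambda>k. T x k - T' x k) \<le> \<epsilon> * lorentz_norm w p x"
      if x: "x \<in> lorentz_space w p" for x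
    proof -
      have eq: "(\<lambda>k. T x k - T' x k) = QN N (T x)" unfolding T'_def PN_def QN_def by auto
      have "Nd (QN N (T x)) powr (1/p) \<le> (\<epsilon> powr p) powr (1/p) * Nd x powr (1/p)"
        using N2[OF x] QN_lor[OF Tin[OF x]] Nd_nonneg x p0 by (intro pw_le1) auto
      then show ?thesis unfolding eq lnorm using eps p0 by (simp add: powr_powr)
    qed
    ultimately show "\<exists>T''\<in>J_j w p. \<forall>x\<in>lorentz_space w p. lorentz_norm w p (\<lambda>k. T x k - T'' x k) \<le> \<epsilon> * lorentz_norm w p x" 
      by blast
  qed
qed

end


lemma underdet:
  fixes z :: "nat \<Rightarrow> seq"
  shows "finite K \<Longrightarrow> finite I \<Longrightarrow> card K < card I \<Longrightarrow>
    \<exists>c. (\<exists>i\<in>I. c i \<noteq> 0) \<and> (\<forall>k\<in>K. (\<Sum>i\<in>I. c i * z i k) = 0)"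
proof (induction K arbitrary: I z rule: finite_induct)
  case empty
  then obtain i where "i \<in> I" by fastforce
  then show ?case by (intro exI[of _ "\<lambda>_. 1"]) auto
next
  case (insert k0 K)
  show ?case
  proof (cases "\<forall>i\<in>I. z i k0 = 0")
    case True
    have "card K < card I" using insert by simp
    then obtain c where c: "\<exists>i\<in>I. c i \<noteq> 0" "\<forall>k\<in>K. (\<Sum>i\<in>I. c i * z i k) = 0"
      using insert.IH[OF insert.prems(1)] by blast
    then show ?thesis using True by (intro exI[of _ c]) auto
  next
    case False
    then obtain j where j: "j \<in> I" "z j k0 \<noteq> 0" by auto
    define I' where "I' = I - {j}"
    define z' where "z' i = (\<lambda>k. z i k - (z i k0 / z j k0) * z j k)" for i
    have I': "finite I'" "card K < card I'"
      using insert j unfolding I'_def by (auto simp: card_Diff_singleton)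
    obtain c' where c': "\<exists>i\<in>I'. c' i \<noteq> 0" "\<forall>k\<in>K. (\<Sum>i\<in>I'. c' i * z' i k) = 0"
      using insert.IH[OF I'] by blast
    define c where "c i = (if i = j then - (\<Sum>i'\<in>I'. c' i' * z i' k0) / z j k0 else c' i)" for i
    have key: "(\<Sum>i\<in>I. c i * z i k) = (\<Sum>i\<in>I'. c' i * z' i k)" for k
    proof -
      have "(\<Sum>i\<in>I. c i * z i k) = c j * z j k + (\<Sum>i\<in>I'. c i * z i k)"
        unfolding I'_def using insert.prems(1) j(1) by (simp add: sum.remove)
      also have "(\<Sum>i\<in>I'. c i * z i k) = (\<Sum>i\<in>I'. c' i * z i k)"
        unfolding c_def I'_def by (intro sum.cong) auto
      also have "(\<Sum>i\<in>I'. c' i * z' i k) = (\<Sum>i\<in>I'. c' i * z i k) - (\<Sum>i\<in>I'. c' i * z i k0) / z j k0 * z j k"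
        unfolding z'_def by (simp add: algebra_simps sum_subtractf sum_distrib_left sum_divide_distrib sum_distrib_right)
      ultimately show ?thesis unfolding c_def by (simp add: algebra_simps)
    qed
    have "\<forall>k\<in>insert k0 K. (\<Sum>i\<in>I. c i * z i k) = 0"
    proof
      fix k assume "k \<in> insert k0 K"
      then show "(\<Sum>i\<in>I. c i * z i k) = 0"
      proof
        assume "k = k0"
        have "(\<Sum>i\<in>I. c i * z i k0) = c j * z j k0 + (\<Sum>i\<in>I'. c' i * z i k0)"
          unfolding I'_def using insert.prems(1) j(1) by (simp add: sum.remove c_def)
        also have "\<dots> = 0" unfolding c_def using j(2) by simp
        finally show ?thesis using \<open>k = k0\<close> by simp
      next
        assume "k \<in> K" then show ?thesis using key c'(2) by simp
      qed
    qed
    moreover have "\<exists>i\<in>I. c i \<noteq> 0" using c'(1) unfolding I'_def c_def by auto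
    ultimately show ?thesis by blast
  qed
qed

lemma finite_max_lt1:
  fixes f :: "nat \<Rightarrow> real"
  shows "finite G \<Longrightarrow> (\<And>k. k \<in> G \<Longrightarrow> f k < 1) \<Longrightarrow> \<exists>m0<1. \<forall>k\<in>G. f k \<le> m0"
proof (induction G rule: finite_induct)
  case empty then show ?case by (intro exI[of _ 0]) auto
next
  case (insert a G)
  then obtain m0 where "m0 < 1" "\<forall>k\<in>G. f k \<le> m0" by auto
  then show ?case using insert.prems by (intro exI[of _ "max m0 (f a)"]) auto
qed

lemma active:
  fixes V :: "seq set"
  assumes V0: "(\<lambda>k. 0) \<in> V" and Vadd: "\<And>y v t. y \<in> V \<Longrightarrow> v \<in> V \<Longrightarrow> (\<lambda>k. y k + t * v k) \<in> V"
    and Vc0: "V \<subseteq> c0"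
    and Vfree: "\<And>K. finite K \<Longrightarrow> card K < D \<Longrightarrow> \<exists>v\<in>V. (\<exists>k. v k \<noteq> 0) \<and> (\<forall>k\<in>K. v k = 0)"
  shows "m \<le> D \<Longrightarrow> \<exists>y\<in>V. \<exists>F. finite F \<and> card F = m \<and> (\<forall>k\<in>F. \<bar>y k\<bar> = 1) \<and> (\<forall>k. \<bar>y k\<bar> \<le> 1)"
proof (induction m)
  case 0
  then show ?case using V0 by (intro bexI[of _ "\<lambda>k. 0"] exI[of _ "{}"]) auto
next
  case (Suc m)
  then obtain y F where y: "y \<in> V" "finite F" "card F = m" "\<forall>k\<in>F. \<bar>y k\<bar> = 1" "\<forall>k. \<bar>y k\<bar> \<le> 1"
    by auto
  obtain v where v: "v \<in> V" "\<exists>k. v k \<noteq> 0" "\<forall>k\<in>F. v k = 0"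
    using Vfree[OF y(2)] y(3) Suc.prems by auto
  obtain k1 where k1: "v k1 \<noteq> 0" using v(2) by auto
  define TS where "TS = {t::real. 0 \<le> t \<and> (\<forall>k. \<bar>y k + t * v k\<bar> \<le> 1)}"
  have TS0: "0 \<in> TS" unfolding TS_def using y(5) by auto
  have TSb: "t \<le> 2 / \<bar>v k1\<bar>" if "t \<in> TS" for t
  proof -
    have "\<bar>t * v k1\<bar> \<le> \<bar>y k1 + t * v k1\<bar> + \<bar>y k1\<bar>" by linarith
    also have "\<dots> \<le> 2"
    proof -
      have "\<bar>y k1 + t * v k1\<bar> \<le> 1" using that unfolding TS_def by blast
      then show ?thesis using y(5)[rule_format, of k1] by linarith
    qed
    finally have "t * \<bar>v k1\<bar> \<le> 2" using that unfolding TS_def by (simp add: abs_mult)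
    then show ?thesis using k1 by (simp add: field_simps)
  qed
  have bdd: "bdd_above TS" using TSb by (intro bdd_aboveI) auto
  define ts where "ts = Sup TS"
  have ts0: "0 \<le> ts" unfolding ts_def by (rule cSup_upper[OF TS0 bdd])
  have tsk: "\<bar>y k + ts * v k\<bar> \<le> 1" for k
  proof (rule ccontr)
    assume "\<not> ?thesis"
    then have gt: "\<bar>y k + ts * v k\<bar> > 1" by simp
    define e where "e = \<bar>y k + ts * v k\<bar> - 1"
    have e: "e > 0" unfolding e_def using gt by simp
    have vk: "v k \<noteq> 0"
    proof
      assume "v k = 0" then show False using gt y(5)[rule_format, of k] by simp
    qed
    have "ts - e / \<bar>v k\<bar> < ts" using e vk by simp
    then obtain t where t: "t \<in> TS" "ts - e / \<bar>v k\<bar> < t" unfolding ts_def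
      using less_cSupD[of TS] TS0 by blast
    have "t \<le> ts" unfolding ts_def by (rule cSup_upper[OF t(1) bdd])
    have "(ts - t) * \<bar>v k\<bar> < e" using t(2) vk by (simp add: field_simps)
    moreover have "\<bar>y k + ts * v k\<bar> \<le> \<bar>y k + t * v k\<bar> + \<bar>(ts - t) * v k\<bar>"
      by (simp add: algebra_simps)
    moreover have "\<bar>(ts - t) * v k\<bar> = (ts - t) * \<bar>v k\<bar>" using \<open>t \<le> ts\<close> by (simp add: abs_mult)
    moreover have "\<bar>y k + t * v k\<bar> \<le> 1" using t(1) unfolding TS_def by auto
    ultimately show False unfolding e_def by linarith
  qed
  define y' where "y' = (\<lambda>k. y k + ts * v k)"
  have y'V: "y' \<in> V" unfolding y'_def by (rule Vadd[OF y(1) v(1)])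
  have new: "\<exists>k. k \<notin> F \<and> \<bar>y' k\<bar> = 1"
  proof (rule ccontr)
    assume "\<not> ?thesis"
    then have lt: "\<And>k. k \<notin> F \<Longrightarrow> \<bar>y' k\<bar> < 1" using tsk unfolding y'_def by (meson le_less)
    have cy': "y' \<in> c0" using y'V Vc0 by auto
    have cv: "v \<in> c0" using v(1) Vc0 by auto
    obtain B where B: "\<And>k. \<bar>v k\<bar> \<le> B" using c0_bnd[OF cv] unfolding bnd_def by auto
    define V0 where "V0 = max B 1"
    have V0: "V0 \<ge> 1" "\<And>k. \<bar>v k\<bar> \<le> V0" unfolding V0_def using B by (auto intro: max.coboundedI1)
    have "(\<lambda>k. \<bar>y' k\<bar>) \<longlonglongrightarrow> 0" using cy' unfolding c0_def by (simp add: tendsto_rabs_zero_iff)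
    then obtain N where N0: "\<forall>k\<ge>N. norm (\<bar>y' k\<bar> - 0) < 1/2" unfolding LIMSEQ_iff
      by (meson divide_pos_pos zero_less_one zero_less_numeral)
    have N: "\<And>k. k \<ge> N \<Longrightarrow> \<bar>y' k\<bar> < 1/2" using N0 by simp
    obtain m0 where m0: "m0 < 1" "\<And>k. k \<in> {k. k < N \<and> k \<notin> F} \<Longrightarrow> \<bar>y' k\<bar> \<le> m0"
    proof -
      have "finite {k. k < N \<and> k \<notin> F}" by simp
      moreover have "\<And>k. k \<in> {k. k < N \<and> k \<notin> F} \<Longrightarrow> \<bar>y' k\<bar> < 1" using lt by blast
      ultimately have "\<exists>m0<1. \<forall>k\<in>{k. k < N \<and> k \<notin> F}. \<bar>y' k\<bar> \<le> m0" by (rule finite_max_lt1)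
      then show ?thesis using that by blast
    qed
    define e where "e = min (1 / (2 * V0)) ((1 - m0) / V0)"
    have epos: "e > 0" unfolding e_def using V0 m0 by auto
    have "ts + e \<in> TS" unfolding TS_def
    proof (intro CollectI conjI allI)
      show "0 \<le> ts + e" using ts0 epos by simp
      fix k
      have eq: "y k + (ts + e) * v k = y' k + e * v k" unfolding y'_def by (simp add: algebra_simps)
      have ev: "\<bar>e * v k\<bar> \<le> e * V0" using V0(2)[of k] epos by (simp add: abs_mult mult_left_mono)
      show "\<bar>y k + (ts + e) * v k\<bar> \<le> 1"
      proof (cases "k \<in> F")
        case True then show ?thesis using v(3) y(4) by simp
      next
        case False
        show ?thesis
        proof (cases "k < N")
          case True
          have "e \<le> (1 - m0) / V0" unfolding e_def by simp
          then have "e * V0 \<le> 1 - m0" using V0(1) by (simp add: le_divide_eq)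
          then show ?thesis unfolding eq using m0(2)[of k] True False ev by auto
        next
          case False
          have "e \<le> 1 / (2 * V0)" unfolding e_def by simp
          then have "e * V0 \<le> 1/2" using V0(1) by (simp add: le_divide_eq)
          then show ?thesis unfolding eq using N[of k] False ev by auto
        qed
      qed
    qed
    then have "ts + e \<le> ts" unfolding ts_def by (rule cSup_upper[OF _ bdd])
    then show False using epos by simp
  qed
  then obtain k2 where k2: "k2 \<notin> F" "\<bar>y' k2\<bar> = 1" by auto
  show ?case
  proof (intro bexI[OF _ y'V] exI[of _ "insert k2 F"] conjI)
    show "finite (insert k2 F)" using y(2) by simp
    show "card (insert k2 F) = Suc m" using y(2,3) k2(1) by simp
    show "\<forall>k\<in>insert k2 F. \<bar>y' k\<bar> = 1" using k2 y(4) v(3) unfolding y'_def by auto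
    show "\<forall>k. \<bar>y' k\<bar> \<le> 1" using tsk unfolding y'_def by auto
  qed
qed


lemma pw_le3:
  fixes a b c p :: real
  assumes "p > 0" "0 \<le> a" "0 \<le> b" "0 \<le> c" "c * a powr (1/p) \<le> b powr (1/p)"
  shows "c powr p * a \<le> b"
proof -
  have "(c * a powr (1/p)) powr p \<le> (b powr (1/p)) powr p"
    using assms by (intro powr_mono2) auto
  also have "(b powr (1/p)) powr p = b" using assms by (simp add: powr_powr)
  also have "(c * a powr (1/p)) powr p = c powr p * a" using assms by (simp add: powr_mult powr_powr)
  finally show ?thesis .
qed

context lor
begin

lemma lincomb:
  assumes M: "M \<subseteq> lorentz_space w p" "lin_subspace M" and B: "lin_on (lorentz_space w p) B"
    and v: "\<And>i. v i \<in> M"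
  shows "finite I \<Longrightarrow> (\<lambda>k. \<Sum>i\<in>I. c i * v i k) \<in> M \<and> B (\<lambda>k. \<Sum>i\<in>I. c i * v i k) = (\<lambda>k. \<Sum>i\<in>I. c i * B (v i) k)"
proof (induction I rule: finite_induct)
  case empty
  then show ?case using M(2) lin_on_zero[OF B zero_lor] unfolding lin_subspace_def by simp
next
  case (insert j I)
  define s where "s = (\<lambda>k. \<Sum>i\<in>I. c i * v i k)"
  have eq: "(\<lambda>k. \<Sum>i\<in>insert j I. c i * v i k) = (\<lambda>k. c j * v j k + 1 * s k)"
    unfolding s_def using insert by simp
  have sM: "s \<in> M" using insert.IH unfolding s_def by simp
  have "(\<lambda>k. c j * v j k + 1 * s k) \<in> M" using M(2) v sM unfolding lin_subspace_def by blast
  moreover have "B (\<lambda>k. c j * v j k + 1 * s k) = (\<lambda>k. c j * B (v j) k + 1 * B s k)"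
    using B v sM M(1) unfolding lin_on_def by blast
  ultimately show ?case using insert.IH insert.hyps unfolding eq s_def by simp
qed

lemma Nd_small:
  assumes y: "y \<in> lp_space p" and b1: "\<And>k. \<bar>y k\<bar> \<le> 1"
  shows "Nd y \<le> real L + w L * Lp y"
proof -
  have yl: "y \<in> lorentz_space w p" by (rule lp_sub(1)[OF y])
  have cy: "y \<in> c0" by (rule lp_c0[OF y])
  have by': "bnd y" by (rule c0_bnd[OF cy])
  have sy: "summable (\<lambda>k. \<bar>y k\<bar> powr p)" using y by (simp add: lp_iff)
  have rs: "summable (\<lambda>n. rearr y n powr p)" "(\<Sum>n. rearr y n powr p) \<le> Lp y"
    using nonneg_bounded_sum[of "\<lambda>n. rearr y n powr p" "Lp y"] sum_rearr_le_lp[OF p0 cy sy]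
    unfolding Lp_def by auto
  have r1: "rearr y n \<le> 1" for n by (rule rearr_bound[OF by' b1])
  have rp1: "rearr y n powr p \<le> 1" for n
  proof -
    have "rearr y n powr p \<le> 1 powr p" using r1[of n] rearr_nonneg[OF by', of n] p0 by (intro powr_mono2) auto
    then show ?thesis by simp
  qed
  define g where "g n = w n * rearr y n powr p" for n
  have sg: "summable g" using yl unfolding g_def by (simp add: lor_iff)
  have "Nd y = (\<Sum>n. g (n + L)) + (\<Sum>i<L. g i)" unfolding Nd_def g_def[symmetric]
    by (rule suminf_split_initial_segment[OF sg])
  also have "(\<Sum>i<L. g i) \<le> (\<Sum>i<L. 1)"
    unfolding g_def using w_le1 w_nonneg rp1 by (intro sum_mono) (meson mult_le_one powr_ge_zero)
  also have "(\<Sum>n. g (n + L)) \<le> (\<Sum>n. w L * rearr y (n + L) powr p)"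
  proof (rule suminf_le)
    show "\<And>n. g (n + L) \<le> w L * rearr y (n + L) powr p" unfolding g_def
      using w_anti[of L] by (intro mult_right_mono) auto
    show "summable (\<lambda>n. g (n + L))" by (rule summable_ignore_initial_segment[OF sg])
    show "summable (\<lambda>n. w L * rearr y (n + L) powr p)"
      by (intro summable_mult summable_ignore_initial_segment[OF rs(1)])
  qed
  also have "(\<Sum>n. w L * rearr y (n + L) powr p) = w L * (\<Sum>n. rearr y (n + L) powr p)"
    by (rule suminf_mult[OF summable_ignore_initial_segment[OF rs(1)]])
  also have "(\<Sum>n. rearr y (n + L) powr p) \<le> (\<Sum>n. rearr y n powr p)"
    using suminf_split_initial_segment[OF rs(1), of L] by (simp add: sum_nonneg)
  also have "\<dots> \<le> Lp y" by (rule rs(2))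
  finally show ?thesis using w_nonneg[of L] by (simp add: mult_left_mono)
qed

lemma part_c: "J_j w p \<subseteq> strictly_singular_ops w p"
proof
  fix S assume "S \<in> J_j w p"
  then obtain A B where S: "S \<in> Ld w p" and A: "A \<in> Ld w p"
    and Bb: "bounded_op (lorentz_space w p) (lorentz_norm w p) (lp_space p) (lp_norm p) B"
    and eq: "\<forall>x\<in>lorentz_space w p. S x = A (jmap (B x))" unfolding J_j_def by auto
  note Bin = DL_D(1)[OF Bb] and Blin = DL_D(2)[OF Bb]
  obtain KA0 where KA0: "KA0 \<ge> 0" "\<forall>x\<in>lorentz_space w p. Nd (A x) \<le> KA0 * Nd x" using Ld_D(3)[OF A] by auto
  obtain KB0 where KB0: "KB0 \<ge> 0" "\<forall>x\<in>lorentz_space w p. Lp (B x) \<le> KB0 * Nd x" using DL_D(3)[OF Bb] by auto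
  define KA where "KA = max KA0 1"
  define KB where "KB = max KB0 1"
  have KA: "KA \<ge> 1" "\<And>x. x \<in> lorentz_space w p \<Longrightarrow> Nd (A x) \<le> KA * Nd x"
  proof -
    show "KA \<ge> 1" unfolding KA_def by simp
    fix x assume x: "x \<in> lorentz_space w p"
    have "Nd (A x) \<le> KA0 * Nd x" using KA0 x by auto
    also have "\<dots> \<le> KA * Nd x" unfolding KA_def using Nd_nonneg[OF x] by (intro mult_right_mono) auto
    finally show "Nd (A x) \<le> KA * Nd x" .
  qed
  have KB: "KB \<ge> 1" "\<And>x. x \<in> lorentz_space w p \<Longrightarrow> Lp (B x) \<le> KB * Nd x"
  proof -
    show "KB \<ge> 1" unfolding KB_def by simp
    fix x assume x: "x \<in> lorentz_space w p"
    have "Lp (B x) \<le> KB0 * Nd x" using KB0 x by auto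
    also have "\<dots> \<le> KB * Nd x" unfolding KB_def using Nd_nonneg[OF x] by (intro mult_right_mono) auto
    finally show "Lp (B x) \<le> KB * Nd x" .
  qed
  show "S \<in> strictly_singular_ops w p" unfolding strictly_singular_ops_def
  proof (intro CollectI conjI S allI impI notI)
    fix M assume M: "M \<subseteq> lorentz_space w p \<and> lin_subspace M \<and> infinite_dim M"
    assume "\<exists>c>0. \<forall>x\<in>M. c * lorentz_norm w p x \<le> lorentz_norm w p (S x)"
    then obtain c where c: "c > 0" "\<And>x. x \<in> M \<Longrightarrow> c * lorentz_norm w p x \<le> lorentz_norm w p (S x)"
      by auto
    have Md: "M \<subseteq> lorentz_space w p" and Ml: "lin_subspace M" using M by auto
    have "infinite_dim M" using M by simp
    then have "\<exists>v. (\<forall>i::nat. v i \<in> M) \<and> (\<forall>(n::nat) c. (\<forall>k. (\<Sum>i<n. c i * v i k) = 0) \<longrightarrow> (\<forall>i<n. c i = 0))"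
      unfolding infinite_dim_def by simp
    then obtain v where vv: "(\<forall>i::nat. v i \<in> M) \<and> (\<forall>(n::nat) c. (\<forall>k. (\<Sum>i<n. c i * v i k) = 0) \<longrightarrow> (\<forall>i<n. c i = 0))"
      ..
    have v: "\<And>i::nat. v i \<in> M" using vv by simp
    have indep: "\<And>(n::nat) c. (\<forall>k. (\<Sum>i<n. c i * v i k) = 0) \<Longrightarrow> (\<forall>i<n. c i = 0)"
      using vv by simp
    have Hx: "c powr p * Nd x \<le> KA * Nd (B x)" if x: "x \<in> M" for x
    proof -
      have xd: "x \<in> lorentz_space w p" using x Md by auto
      have Bxd: "B x \<in> lorentz_space w p" using lp_sub(1)[OF Bin[OF xd]] .
      have "c powr p * Nd x \<le> Nd (S x)"
        using c(2)[OF x] Nd_nonneg[OF xd] Nd_nonneg[OF Ld_D(1)[OF S xd]] c(1) p0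
        unfolding lnorm by (intro pw_le3) auto
      also have "S x = A (B x)" using eq xd by (simp add: jmap_def)
      also have "Nd (A (B x)) \<le> KA * Nd (B x)" by (rule KA(2)[OF Bxd])
      finally show ?thesis .
    qed
    define \<delta> where "\<delta> = c powr p / (KA * KB)"
    have dpos: "\<delta> > 0" unfolding \<delta>_def using c KA KB by simp
    have key: "\<delta> * Lp (B x) \<le> Nd (B x)" if x: "x \<in> M" for x
    proof -
      have xd: "x \<in> lorentz_space w p" using x Md by auto
      have "c powr p * Lp (B x) \<le> c powr p * (KB * Nd x)" using KB(2)[OF xd] by (intro mult_left_mono) auto
      also have "\<dots> = KB * (c powr p * Nd x)" by simp
      also have "\<dots> \<le> KB * (KA * Nd (B x))" using Hx[OF x] KB(1) by (intro mult_left_mono) auto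
      finally have "c powr p * Lp (B x) \<le> (KA * KB) * Nd (B x)" by (simp add: algebra_simps)
      then show ?thesis unfolding \<delta>_def using KA(1) KB(1)
        by (simp add: divide_le_eq mult.commute mult.left_commute)
    qed
    have inj: "x = (\<lambda>k. 0)" if x: "x \<in> M" and Bx: "B x = (\<lambda>k. 0)" for x
    proof -
      have xd: "x \<in> lorentz_space w p" using x Md by auto
      have "c powr p * Nd x \<le> 0" using Hx[OF x] Bx Nd_0 by simp
      then have "Nd x \<le> 0" using c(1) by (simp add: mult_le_0_iff)
      then have "Nd x = 0" using Nd_nonneg[OF xd] by simp
      then show ?thesis by (rule Nd_zero[OF xd])
    qed
    obtain L where L: "w L < \<delta> / 2"
    proof -
      have "\<forall>\<^sub>F n in sequentially. w n < \<delta> / 2"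
        using order_tendstoD(2)[OF wlim, of "\<delta>/2"] dpos by simp
      then show ?thesis using that by (auto simp: eventually_sequentially)
    qed
    define D where "D = nat \<lceil>2 * real L / \<delta>\<rceil> + 1"
    have Dgt: "real D > 2 * real L / \<delta>" unfolding D_def by linarith
    define V where "V = B ` M"
    have VM: "\<And>y. y \<in> V \<Longrightarrow> \<exists>x\<in>M. y = B x" unfolding V_def by auto
    have "\<exists>y\<in>V. \<exists>F. finite F \<and> card F = D \<and> (\<forall>k\<in>F. \<bar>y k\<bar> = 1) \<and> (\<forall>k. \<bar>y k\<bar> \<le> 1)"
    proof (rule active[of V D D])
      have z: "(\<lambda>k. 0) \<in> M" using Ml unfolding lin_subspace_def by blast
      show "(\<lambda>k. 0) \<in> V" unfolding V_def
        by (rule image_eqI[of _ B "\<lambda>k. 0"]) (use lin_on_zero[OF Blin zero_lor] z in auto)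
      show "\<And>y v t. y \<in> V \<Longrightarrow> v \<in> V \<Longrightarrow> (\<lambda>k. y k + t * v k) \<in> V"
      proof -
        fix y v' t assume "y \<in> V" "v' \<in> V"
        then obtain x1 x2 where x: "x1 \<in> M" "x2 \<in> M" "y = B x1" "v' = B x2" unfolding V_def by auto
        have "(\<lambda>k. 1 * x1 k + t * x2 k) \<in> M" using Ml x unfolding lin_subspace_def by blast
        moreover have "B (\<lambda>k. 1 * x1 k + t * x2 k) = (\<lambda>k. 1 * B x1 k + t * B x2 k)"
          using Blin x Md unfolding lin_on_def by blast
        ultimately show "(\<lambda>k. y k + t * v' k) \<in> V" unfolding V_def using x
          by (intro image_eqI[of _ B "\<lambda>k. 1 * x1 k + t * x2 k"]) auto
      qed
      show "V \<subseteq> c0" unfolding V_def using Bin Md lp_c0 by blast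
      show "\<And>K. finite K \<Longrightarrow> card K < D \<Longrightarrow> \<exists>v\<in>V. (\<exists>k. v k \<noteq> 0) \<and> (\<forall>k\<in>K. v k = 0)"
      proof -
        fix K :: "nat set" assume K: "finite K" "card K < D"
        obtain cc where cc: "\<exists>i\<in>{..<D}. cc i \<noteq> 0" "\<forall>k\<in>K. (\<Sum>i\<in>{..<D}. cc i * B (v i) k) = 0"
          using underdet[OF K(1) finite_lessThan[of D], where z="\<lambda>i. B (v i)"] K(2) by auto
        define x where "x = (\<lambda>k. \<Sum>i\<in>{..<D}. cc i * v i k)"
        have xl: "x \<in> M" "B x = (\<lambda>k. \<Sum>i\<in>{..<D}. cc i * B (v i) k)"
          using lincomb[OF Md Ml Blin v finite_lessThan, of cc] unfolding x_def by auto
        have "\<exists>k. B x k \<noteq> 0"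
        proof (rule ccontr)
          assume "\<not> ?thesis"
          then have "B x = (\<lambda>k. 0)" by auto
          then have "x = (\<lambda>k. 0)" by (rule inj[OF xl(1)])
          then have "\<forall>k. (\<Sum>i<D. cc i * v i k) = 0" unfolding x_def by (simp add: fun_eq_iff)
          then have "\<forall>i<D. cc i = 0" by (rule indep)
          then show False using cc(1) by auto
        qed
        moreover have "\<forall>k\<in>K. B x k = 0" using xl(2) cc(2) by simp
        ultimately show "\<exists>v\<in>V. (\<exists>k. v k \<noteq> 0) \<and> (\<forall>k\<in>K. v k = 0)"
          using xl(1) unfolding V_def by blast
      qed
    qed simp
    then obtain y F where y: "y \<in> V" "finite F" "card F = D" "\<forall>k\<in>F. \<bar>y k\<bar> = 1" "\<forall>k. \<bar>y k\<bar> \<le> 1"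
      by blast
    obtain x where x: "x \<in> M" "y = B x" using VM[OF y(1)] by auto
    have ylp: "y \<in> lp_space p" using x Bin Md by auto
    have sy: "summable (\<lambda>k. \<bar>y k\<bar> powr p)" using ylp by (simp add: lp_iff)
    have "real D = (\<Sum>k\<in>F. \<bar>y k\<bar> powr p)" using y(3,4) by simp
    also have "\<dots> \<le> Lp y" unfolding Lp_def by (rule sum_le_suminf[OF sy y(2)]) auto
    finally have LD: "real D \<le> Lp y" .
    have "\<delta> * Lp y \<le> Nd y" using key[OF x(1)] x(2) by simp
    also have "\<dots> \<le> real L + w L * Lp y" by (rule Nd_small[OF ylp]) (use y(5) in auto)
    also have "\<dots> \<le> real L + \<delta> / 2 * Lp y" using L Lp_nonneg[OF ylp] by (intro add_left_mono mult_right_mono) auto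
    finally have "\<delta> / 2 * Lp y \<le> real L" by simp
    then have "Lp y \<le> 2 * real L / \<delta>" using dpos by (simp add: field_simps)
    then show False using LD Dgt by simp
  qed
qed

end


lemma jensen_abs:
  fixes f :: "nat \<Rightarrow> real"
  assumes p: "p \<ge> 1" and I: "finite I"
  shows "\<bar>\<Sum>k\<in>I. f k\<bar> powr p \<le> real (card I) powr (p - 1) * (\<Sum>k\<in>I. \<bar>f k\<bar> powr p)"
proof -
  define S where "S = {k\<in>I. f k \<noteq> 0}"
  have S: "finite S" "S \<subseteq> I" unfolding S_def using I by auto
  have sumS: "(\<Sum>k\<in>I. \<bar>f k\<bar>) = (\<Sum>k\<in>S. \<bar>f k\<bar>)"
    unfolding S_def using I by (intro sum.mono_neutral_right) auto
  have sumSp: "(\<Sum>k\<in>I. \<bar>f k\<bar> powr p) = (\<Sum>k\<in>S. \<bar>f k\<bar> powr p)"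
    unfolding S_def using I by (intro sum.mono_neutral_right) auto
  have rhs0: "0 \<le> real (card I) powr (p - 1) * (\<Sum>k\<in>I. \<bar>f k\<bar> powr p)"
    by (intro mult_nonneg_nonneg sum_nonneg) auto
  have "\<bar>\<Sum>k\<in>I. f k\<bar> powr p \<le> (\<Sum>k\<in>I. \<bar>f k\<bar>) powr p"
    using p by (intro powr_mono2) (auto intro: sum_abs)
  also have "\<dots> = (\<Sum>k\<in>S. \<bar>f k\<bar>) powr p" by (simp add: sumS)
  also have "\<dots> \<le> real (card I) powr (p - 1) * (\<Sum>k\<in>I. \<bar>f k\<bar> powr p)"
  proof (cases "S = {}")
    case True then show ?thesis using rhs0 p by simp
  next
    case False
    define n where "n = real (card S)"
    have n: "n \<ge> 1" unfolding n_def using False S(1) by (simp add: Suc_leI card_gt_0_iff)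
    have conv: "convex_on {0<..} (\<lambda>x::real. x powr p)" by (rule powr_convex[OF p])
    have "(\<Sum>k\<in>S. (1/n) *\<^sub>R \<bar>f k\<bar>) powr p \<le> (\<Sum>k\<in>S. (1/n) * \<bar>f k\<bar> powr p)"
      using convex_on_sum[OF S(1) False conv, of "\<lambda>_. 1/n" "\<lambda>k. \<bar>f k\<bar>"] n
      unfolding S_def n_def by (auto simp: S_def)
    moreover have "(\<Sum>k\<in>S. (1/n) *\<^sub>R \<bar>f k\<bar>) = (1/n) * (\<Sum>k\<in>S. \<bar>f k\<bar>)"
      by (simp add: sum_distrib_left)
    moreover have "(\<Sum>k\<in>S. (1/n) * \<bar>f k\<bar> powr p) = (1/n) * (\<Sum>k\<in>S. \<bar>f k\<bar> powr p)"
      by (simp add: sum_distrib_left)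
    ultimately have ineq: "((1/n) * (\<Sum>k\<in>S. \<bar>f k\<bar>)) powr p \<le> (1/n) * (\<Sum>k\<in>S. \<bar>f k\<bar> powr p)"
      by simp
    have e1: "n powr p * (1/n) powr p = 1" using n by (simp add: powr_mult[symmetric])
    define X where "X = (\<Sum>k\<in>S. \<bar>f k\<bar>)"
    have "n powr p * ((1/n) * X) powr p = (n powr p * (1/n) powr p) * X powr p"
      by (simp only: powr_mult mult.assoc)
    then have "(\<Sum>k\<in>S. \<bar>f k\<bar>) powr p = n powr p * ((1/n) * (\<Sum>k\<in>S. \<bar>f k\<bar>)) powr p"
      using e1 unfolding X_def by simp
    also have "\<dots> \<le> n powr p * ((1/n) * (\<Sum>k\<in>S. \<bar>f k\<bar> powr p))"
      using ineq by (intro mult_left_mono) auto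
    finally have "(\<Sum>k\<in>S. \<bar>f k\<bar>) powr p \<le> n powr p * ((1/n) * (\<Sum>k\<in>S. \<bar>f k\<bar> powr p))" .
    also have "n powr p * ((1/n) * (\<Sum>k\<in>S. \<bar>f k\<bar> powr p)) = n powr (p - 1) * (\<Sum>k\<in>S. \<bar>f k\<bar> powr p)"
      using n by (simp add: powr_diff)
    also have "\<dots> \<le> real (card I) powr (p - 1) * (\<Sum>k\<in>S. \<bar>f k\<bar> powr p)"
    proof (intro mult_right_mono powr_mono2)
      show "n \<le> real (card I)" unfolding n_def using card_mono[OF I S(2)] by simp
    qed (use p n in \<open>auto intro: sum_nonneg\<close>)
    finally show ?thesis by (simp add: sumSp)
  qed
  finally show ?thesis .
qed

lemma abel:
  fixes y e :: "nat \<Rightarrow> real"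
  assumes dec: "\<And>i. y (Suc i) \<le> y i" and nn: "\<And>i. 0 \<le> y i" and E: "\<And>M. 0 \<le> (\<Sum>i<M. e i)"
  shows "(\<Sum>i<M. e i) * y M \<le> (\<Sum>i<M. e i * y i)"
proof (induction M)
  case 0 then show ?case by simp
next
  case (Suc M)
  have "(\<Sum>i<Suc M. e i) * y (Suc M) \<le> (\<Sum>i<Suc M. e i) * y M"
    using E[of "Suc M"] dec[of M] by (intro mult_left_mono) auto
  also have "\<dots> = (\<Sum>i<M. e i) * y M + e M * y M" by (simp add: algebra_simps)
  also have "\<dots> \<le> (\<Sum>i<M. e i * y i) + e M * y M" using Suc.IH by simp
  also have "\<dots> = (\<Sum>i<Suc M. e i * y i)" by simp
  finally show ?case .
qed

lemma count_lt: "(\<Sum>i<M. (if i < N then 1 else 0) :: real) = real (min M N)"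
  by (induction M) (auto simp: min_def)

lemma sum_if_lt: "(N::nat) \<le> L \<Longrightarrow> (\<Sum>i<L. if i < N then f i else 0) = (\<Sum>i<N. (f i :: real))"
proof (induction L rule: dec_induct)
  case base then show ?case by (intro sum.cong) auto
next
  case (step L) then show ?case by simp
qed

context lor
begin

definition W :: "nat \<Rightarrow> real" where "W N = (\<Sum>i<N. w i)"

lemma W_nonneg: "0 \<le> W N" unfolding W_def by (intro sum_nonneg w_nonneg)

lemma W_mono: "M \<le> N \<Longrightarrow> W M \<le> W N"
  unfolding W_def by (intro sum_mono2) (auto simp: w_nonneg)

lemma W_ge1: "1 \<le> N \<Longrightarrow> 1 \<le> W N"
  using W_mono[of 1 N] w0 by (simp add: W_def)

lemma W_unb: "\<exists>N. W N > B"
proof (rule ccontr)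
  assume "\<not> ?thesis"
  then have "\<And>N. (\<Sum>i<N. w i) \<le> B" unfolding W_def by (simp add: not_less)
  then have "summable w" using nonneg_bounded_sum(1)[of w B] w_nonneg by auto
  then show False using wns by simp
qed

lemma W_avg_lim: "\<epsilon> > 0 \<Longrightarrow> \<exists>N0. \<forall>N\<ge>N0. W N / real N < \<epsilon>"
proof -
  assume e: "\<epsilon> > 0"
  have "\<forall>\<^sub>F n in sequentially. w n < \<epsilon> / 2" using order_tendstoD(2)[OF wlim, of "\<epsilon>/2"] e by simp
  then obtain M where M: "\<And>n. n \<ge> M \<Longrightarrow> w n < \<epsilon> / 2" by (auto simp: eventually_sequentially)
  define N0 where "N0 = max (M + 1) (nat \<lceil>2 * W M / \<epsilon>\<rceil> + 1)"
  show ?thesis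
  proof (intro exI allI impI)
    fix N assume N: "N \<ge> N0"
    then have NM: "N \<ge> M" and N1: "N \<ge> 1" unfolding N0_def by auto
    have N2: "real N > 2 * W M / \<epsilon>" using N unfolding N0_def by linarith
    have "W N = (\<Sum>i\<in>{0..<M}. w i) + (\<Sum>i\<in>{M..<N}. w i)"
      unfolding W_def using NM by (simp add: atLeast0LessThan[symmetric] sum.atLeastLessThan_concat)
    also have "(\<Sum>i\<in>{M..<N}. w i) \<le> (\<Sum>i\<in>{M..<N}. \<epsilon> / 2)" using M by (intro sum_mono) (auto intro: less_imp_le)
    also have "\<dots> \<le> real N * (\<epsilon> / 2)" using e by simp
    finally have "W N \<le> W M + real N * (\<epsilon> / 2)" unfolding W_def by (simp add: atLeast0LessThan)
    moreover have "W M < real N * (\<epsilon> / 2)" using N2 e by (simp add: field_simps)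
    ultimately have "W N < real N * \<epsilon>" by simp
    then show "W N / real N < \<epsilon>" using N1 by (simp add: divide_less_eq mult.commute)
  qed
qed

lemma W_avg_step: "1 \<le> N \<Longrightarrow> W (Suc N) / real (Suc N) \<le> W N / real N"
proof -
  assume N: "1 \<le> N"
  have "real N * w N \<le> W N" unfolding W_def
    using sum_mono[of "{..<N}" "\<lambda>_. w N" w] w_anti by simp
  then have "real N * (W N + w N) \<le> (real N + 1) * W N" by (simp add: algebra_simps)
  moreover have "W (Suc N) = W N + w N" unfolding W_def by simp
  moreover have "0 < real N" using N by simp
  ultimately show ?thesis by (simp add: field_simps)
qed

lemma W_avg_anti: "1 \<le> M \<Longrightarrow> M \<le> N \<Longrightarrow> W N / real N \<le> W M / real M"
proof -
  assume M: "1 \<le> M" and MN: "M \<le> N"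
  show ?thesis using MN
  proof (induction N rule: dec_induct)
    case base then show ?case by simp
  next
    case (step N)
    then show ?case using W_avg_step[of N] M by linarith
  qed
qed

lemma exN: "1 \<le> M \<Longrightarrow> \<exists>N. M < N \<and> 2 * W M \<le> W N \<and> W N / real N \<le> W M / (2 * real M)"
proof -
  assume M: "1 \<le> M"
  have pos: "W M / (2 * real M) > 0" using W_ge1[OF M] M by simp
  obtain N1 where N1: "\<And>N. N \<ge> N1 \<Longrightarrow> W N / real N < W M / (2 * real M)"
    using W_avg_lim[OF pos] by auto
  obtain N2 where N2: "W N2 > 2 * W M" using W_unb by auto
  define N where "N = max (max N1 N2) (M + 1)"
  have a: "W N2 \<le> W N" unfolding N_def by (intro W_mono) auto
  have b: "M < N" unfolding N_def by simp
  have "N1 \<le> N" unfolding N_def by simp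
  then have c: "W N / real N \<le> W M / (2 * real M)" using N1[of N] by simp
  show ?thesis using a b c N2 by (intro exI[of _ N]) auto
qed

primrec Nb :: "nat \<Rightarrow> nat" where
  "Nb 0 = 1"
| "Nb (Suc n) = (LEAST N. Nb n < N \<and> 2 * W (Nb n) \<le> W N \<and> W N / real N \<le> W (Nb n) / (2 * real (Nb n)))"

lemma Nb_ge1: "1 \<le> Nb n"
proof (induction n)
  case 0 then show ?case by simp
next
  case (Suc n)
  have "Nb n < Nb (Suc n)" unfolding Nb.simps using LeastI_ex[OF exN[OF Suc.IH]] by blast
  then show ?case using Suc.IH by simp
qed

lemma Nb_step: "Nb n < Nb (Suc n) \<and> 2 * W (Nb n) \<le> W (Nb (Suc n)) \<and>
   W (Nb (Suc n)) / real (Nb (Suc n)) \<le> W (Nb n) / (2 * real (Nb n))"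
  unfolding Nb.simps(2) by (rule LeastI_ex[OF exN[OF Nb_ge1]])

lemma Nb_smono: "strict_mono Nb"
  using Nb_step by (intro strict_monoI_Suc) auto

lemma Nb_gt: "n < Nb n"
proof (induction n)
  case 0 then show ?case by simp
next
  case (Suc n) then show ?case using Nb_step[of n] by simp
qed

definition g :: "nat \<Rightarrow> real" where "g n = W (Nb n) / real (Nb n)"

lemma g_pos: "0 < g n" unfolding g_def using W_ge1[OF Nb_ge1[of n]] Nb_ge1[of n]
  by (intro divide_pos_pos) auto

lemma g_step: "2 * g (Suc n) \<le> g n"
  using Nb_step[of n] Nb_ge1[of n] unfolding g_def by (simp add: field_simps)

lemma SW: "(\<Sum>n<Suc j. W (Nb n)) \<le> 2 * W (Nb j)"
proof (induction j)
  case 0 then show ?case using W_nonneg by simp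
next
  case (Suc j)
  then show ?case using Nb_step[of j] by simp
qed

lemma G: "a \<le> b \<Longrightarrow> (\<Sum>n\<in>{a..<b}. g n) + 2 * g b \<le> 2 * g a"
proof (induction b rule: dec_induct)
  case base then show ?case by simp
next
  case (step b)
  have "(\<Sum>n\<in>{a..<Suc b}. g n) = (\<Sum>n\<in>{a..<b}. g n) + g b" using step.hyps by simp
  then show ?case using step.IH g_step[of b] by simp
qed

lemma K3: "(\<Sum>n<K. g n * real (min M (Nb n))) \<le> 4 * W M"
proof (cases "M = 0")
  case True then show ?thesis using W_nonneg by simp
next
  case False
  then have M1: "1 \<le> M" by simp
  define n0 where "n0 = (LEAST n. M < Nb n)"
  have n0a: "M < Nb n0" unfolding n0_def by (rule LeastI[of _ M]) (rule Nb_gt)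
  have n0b: "n < n0 \<Longrightarrow> Nb n \<le> M" for n unfolding n0_def using not_less_Least by (metis not_le)
  have n0c: "n0 \<le> n \<Longrightarrow> M < Nb n" for n using n0a Nb_smono by (metis order_less_le_trans strict_mono_less_eq)
  define j where "j = min K n0"
  have split: "{..<K} = {..<j} \<union> {j..<K}" "{..<j} \<inter> {j..<K} = {}" unfolding j_def by auto
  have "(\<Sum>n<K. g n * real (min M (Nb n))) = (\<Sum>n<j. g n * real (min M (Nb n))) + (\<Sum>n\<in>{j..<K}. g n * real (min M (Nb n)))"
    by (subst split(1), rule sum.union_disjoint) (use split(2) in auto)
  also have "(\<Sum>n<j. g n * real (min M (Nb n))) \<le> 2 * W M"
  proof (cases j)
    case 0 then show ?thesis using W_nonneg by simp
  next
    case (Suc j')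
    have jl: "\<And>n. n < j \<Longrightarrow> Nb n \<le> M" using n0b unfolding j_def by auto
    have "(\<Sum>n<j. g n * real (min M (Nb n))) = (\<Sum>n<j. W (Nb n))"
    proof (intro sum.cong refl)
      fix n assume "n \<in> {..<j}"
      then have "Nb n \<le> M" using jl by simp
      then have "min M (Nb n) = Nb n" by (simp add: min_def)
      then show "g n * real (min M (Nb n)) = W (Nb n)" unfolding g_def using Nb_ge1[of n] by simp
    qed
    also have "\<dots> = (\<Sum>n<Suc j'. W (Nb n))" using Suc by simp
    also have "\<dots> \<le> 2 * W (Nb j')" by (rule SW)
    also have "W (Nb j') \<le> W M" using n0b[of j'] Suc unfolding j_def by (intro W_mono) auto
    finally show ?thesis by simp
  qed
  also have "(\<Sum>n\<in>{j..<K}. g n * real (min M (Nb n))) \<le> 2 * W M"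
  proof (cases "j = K")
    case True then show ?thesis using W_nonneg by simp
  next
    case False
    then have jn0: "j = n0" and jK: "j \<le> K" unfolding j_def by auto
    have "(\<Sum>n\<in>{j..<K}. g n * real (min M (Nb n))) = (\<Sum>n\<in>{j..<K}. g n) * real M"
      unfolding sum_distrib_right using n0c jn0 by (intro sum.cong) (auto simp: min_def less_imp_le)
    also have "\<dots> \<le> (2 * g j) * real M"
      using G[OF jK] g_pos[of K] by (intro mult_right_mono) auto
    also have "g j * real M \<le> W M"
    proof -
      have "g j \<le> W M / real M" unfolding g_def jn0 using W_avg_anti[OF M1, of "Nb n0"] n0a by simp
      then show ?thesis using M1 by (simp add: le_divide_eq)
    qed
    then have "(2 * g j) * real M \<le> 2 * W M" by simp
    finally show ?thesis .
  qed
  finally show ?thesis by simp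
qed

end


context lor
begin

definition sb :: "nat \<Rightarrow> nat" where "sb n = (\<Sum>m<n. Nb m)"
definition Ib :: "nat \<Rightarrow> nat set" where "Ib n = {sb n ..< sb n + Nb n}"
definition ab :: "nat \<Rightarrow> real" where "ab n = W (Nb n) powr (1/p) / real (Nb n)"
definition Bop :: "seq \<Rightarrow> seq" where "Bop x = (\<lambda>n. ab n * (\<Sum>k\<in>Ib n. x k))"

lemma Ib_card: "card (Ib n) = Nb n" by (simp add: Ib_def)
lemma Ib_fin: "finite (Ib n)" by (simp add: Ib_def)

lemma sb_mono: "m \<le> n \<Longrightarrow> sb m \<le> sb n" unfolding sb_def by (rule sum_mono2) auto

lemma Ib_disj: "m \<noteq> n \<Longrightarrow> k \<in> Ib m \<Longrightarrow> k \<notin> Ib n"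
proof -
  have lt: "k \<in> Ib m \<Longrightarrow> k \<notin> Ib n" if "m < n" for m n k
  proof -
    have "sb m + Nb m = sb (Suc m)" unfolding sb_def by simp
    also have "\<dots> \<le> sb n" using that by (intro sb_mono) simp
    finally show "k \<in> Ib m \<Longrightarrow> k \<notin> Ib n" unfolding Ib_def by auto
  qed
  assume "m \<noteq> n" "k \<in> Ib m"
  then show "k \<notin> Ib n" using lt[of m n k] lt[of n m k] by (cases "m < n") auto
qed

lemma ab_nonneg: "0 \<le> ab n" unfolding ab_def by simp

lemma ab_pow: "ab n powr p * real (Nb n) powr (p - 1) = g n"
proof -
  have N: "real (Nb n) \<ge> 1" using Nb_ge1[of n] by simp
  have W: "W (Nb n) \<ge> 1" using W_ge1[OF Nb_ge1[of n]] .
  have "ab n powr p = W (Nb n) / real (Nb n) powr p"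
    unfolding ab_def using W p0 by (simp add: powr_divide powr_powr)
  moreover have "real (Nb n) powr (p - 1) = real (Nb n) powr p / real (Nb n)"
    using N by (simp add: powr_diff)
  ultimately show ?thesis unfolding g_def using N by simp
qed

lemma K1:
  assumes x: "x \<in> lorentz_space w p"
  shows "\<bar>Bop x n\<bar> powr p \<le> g n * (\<Sum>i<Nb n. rearr x i powr p)"
proof -
  have cx: "x \<in> c0" using x by (simp add: lor_iff)
  have eq: "\<bar>Bop x n\<bar> powr p = ab n powr p * \<bar>\<Sum>k\<in>Ib n. x k\<bar> powr p"
    unfolding Bop_def using ab_nonneg[of n] by (simp add: abs_mult powr_mult)
  have A: "\<bar>\<Sum>k\<in>Ib n. x k\<bar> powr p \<le> real (Nb n) powr (p - 1) * (\<Sum>k\<in>Ib n. \<bar>x k\<bar> powr p)"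
    using jensen_abs[OF p1 Ib_fin, of x n] by (simp add: Ib_card)
  have B: "(\<Sum>k\<in>Ib n. \<bar>x k\<bar> powr p) \<le> (\<Sum>i<Nb n. rearr x i powr p)"
    by (rule sum_lp_le_rearr[OF p0 cx Ib_fin Ib_card])
  have C: "\<bar>\<Sum>k\<in>Ib n. x k\<bar> powr p \<le> real (Nb n) powr (p - 1) * (\<Sum>i<Nb n. rearr x i powr p)"
    using A B by (meson mult_left_mono order_trans powr_ge_zero)
  have "\<bar>Bop x n\<bar> powr p \<le> ab n powr p * (real (Nb n) powr (p - 1) * (\<Sum>i<Nb n. rearr x i powr p))"
    unfolding eq using C by (intro mult_left_mono) auto
  also have "\<dots> = g n * (\<Sum>i<Nb n. rearr x i powr p)" using ab_pow[of n] by (simp add: mult.assoc[symmetric])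
  finally show ?thesis .
qed

lemma K2:
  assumes x: "x \<in> lorentz_space w p"
  shows "(\<Sum>n<K. g n * (\<Sum>i<Nb n. rearr x i powr p)) \<le> 4 * Nd x"
proof -
  have cx: "x \<in> c0" using x by (simp add: lor_iff)
  have bx: "bnd x" by (rule c0_bnd[OF cx])
  have sx: "summable (\<lambda>n. w n * rearr x n powr p)" using x by (simp add: lor_iff)
  define y where "y i = rearr x i powr p" for i
  define L where "L = Nb K"
  define ind where "ind i n = (if i < Nb n then 1 else (0::real))" for i n
  define cc where "cc i = (\<Sum>n<K. g n * ind i n)" for i
  have NbL: "n < K \<Longrightarrow> Nb n \<le> L" for n unfolding L_def using Nb_smono by (simp add: strict_mono_less_eq)
  have "(\<Sum>n<K. g n * (\<Sum>i<Nb n. y i)) = (\<Sum>n<K. g n * (\<Sum>i<L. ind i n * y i))"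
  proof (intro sum.cong refl)
    fix n assume "n \<in> {..<K}"
    then have "(\<Sum>i<L. if i < Nb n then y i else 0) = (\<Sum>i<Nb n. y i)" using NbL by (intro sum_if_lt) auto
    moreover have "(\<Sum>i<L. ind i n * y i) = (\<Sum>i<L. if i < Nb n then y i else 0)"
      unfolding ind_def by (intro sum.cong) auto
    ultimately show "g n * (\<Sum>i<Nb n. y i) = g n * (\<Sum>i<L. ind i n * y i)" by simp
  qed
  also have "\<dots> = (\<Sum>n<K. \<Sum>i<L. g n * (ind i n * y i))" by (simp add: sum_distrib_left)
  also have "\<dots> = (\<Sum>i<L. \<Sum>n<K. g n * (ind i n * y i))" by (rule sum.swap)
  also have "\<dots> = (\<Sum>i<L. cc i * y i)" unfolding cc_def
    by (simp add: sum_distrib_right mult.assoc)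
  also have "\<dots> \<le> (\<Sum>i<L. 4 * w i * y i)"
  proof -
    define e where "e i = 4 * w i - cc i" for i
    have ccsum: "(\<Sum>i<M. cc i) = (\<Sum>n<K. g n * real (min M (Nb n)))" for M
    proof -
      have "(\<Sum>i<M. cc i) = (\<Sum>n<K. \<Sum>i<M. g n * ind i n)" unfolding cc_def by (rule sum.swap)
      also have "\<dots> = (\<Sum>n<K. g n * (\<Sum>i<M. ind i n))" by (simp add: sum_distrib_left)
      also have "\<dots> = (\<Sum>n<K. g n * real (min M (Nb n)))" unfolding ind_def by (simp add: count_lt)
      finally show ?thesis .
    qed
    have E: "0 \<le> (\<Sum>i<M. e i)" for M
    proof -
      have "(\<Sum>i<M. e i) = 4 * W M - (\<Sum>i<M. cc i)" unfolding e_def W_def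
        by (simp add: sum_subtractf sum_distrib_left)
      then show ?thesis using K3[where K=K and M=M] ccsum[of M] by simp
    qed
    have dec: "y (Suc i) \<le> y i" for i unfolding y_def
      using rearr_Suc_le[OF bx, of i] rearr_nonneg[OF bx, of "Suc i"] p0 by (intro powr_mono2) auto
    have nn: "0 \<le> y i" for i unfolding y_def by simp
    have "(\<Sum>i<L. e i) * y L \<le> (\<Sum>i<L. e i * y i)" by (rule abel[where y=y and e=e, OF dec nn E])
    moreover have "0 \<le> (\<Sum>i<L. e i) * y L" using E[of L] nn[of L] by simp
    ultimately have "0 \<le> (\<Sum>i<L. e i * y i)" by linarith
    moreover have "(\<Sum>i<L. e i * y i) = (\<Sum>i<L. 4 * w i * y i) - (\<Sum>i<L. cc i * y i)"
      unfolding e_def by (simp add: sum_subtractf algebra_simps)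
    ultimately show ?thesis by simp
  qed
  also have "\<dots> = 4 * (\<Sum>i<L. w i * rearr x i powr p)" unfolding y_def by (simp add: sum_distrib_left mult.assoc)
  also have "\<dots> \<le> 4 * Nd x" unfolding Nd_def
    using sum_le_suminf[OF sx, of "{..<L}"] term_nonneg by simp
  finally show ?thesis unfolding y_def .
qed

lemma Bop_lp: "x \<in> lorentz_space w p \<Longrightarrow> Bop x \<in> lp_space p \<and> Lp (Bop x) \<le> 4 * Nd x"
proof -
  assume x: "x \<in> lorentz_space w p"
  have "(\<Sum>n<K. \<bar>Bop x n\<bar> powr p) \<le> 4 * Nd x" for K
  proof -
    have "(\<Sum>n<K. \<bar>Bop x n\<bar> powr p) \<le> (\<Sum>n<K. g n * (\<Sum>i<Nb n. rearr x i powr p))"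
      by (intro sum_mono K1[OF x])
    also have "\<dots> \<le> 4 * Nd x" by (rule K2[OF x])
    finally show ?thesis .
  qed
  then show ?thesis using nonneg_bounded_sum[of "\<lambda>n. \<bar>Bop x n\<bar> powr p" "4 * Nd x"]
    unfolding lp_iff Lp_def by auto
qed

lemma Bop_lin: "lin_on X Bop"
  unfolding lin_on_def Bop_def
  by (auto simp: fun_eq_iff sum.distrib sum_distrib_left algebra_simps)

lemma Bop_Ld: "Bop \<in> Ld w p"
proof (rule Ld_I[OF _ Bop_lin, of 4])
  fix x assume x: "x \<in> lorentz_space w p"
  show "Bop x \<in> lorentz_space w p" using Bop_lp[OF x] lp_sub(1) by auto
  show "Nd (Bop x) \<le> 4 * Nd x" using Bop_lp[OF x] lp_sub(2) by force
qed simp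

lemma Bop_Jj: "Bop \<in> J_j w p"
proof -
  have idLd: "(\<lambda>x. x) \<in> Ld w p" by (rule Ld_I[of _ 1]) (auto simp: lin_on_def)
  have Bb: "bounded_op (lorentz_space w p) (lorentz_norm w p) (lp_space p) (lp_norm p) Bop"
    by (rule DL_I[OF _ Bop_lin, of 4]) (use Bop_lp in auto)
  show ?thesis unfolding J_j_def
    apply (rule CollectI, rule conjI[OF Bop_Ld])
    apply (rule exI[of _ "\<lambda>x. x"], rule exI[of _ Bop])
    using idLd Bb by (simp add: jmap_def)
qed

lemma Bop_clos: "Bop \<in> op_closure w p (J_j w p)"
  unfolding op_closure_def
proof (intro CollectI conjI Bop_Ld allI impI)
  fix \<epsilon> :: real assume e: "\<epsilon> > 0"
  have "lorentz_norm w p (\<lambda>k. Bop x k - Bop x k) \<le> \<epsilon> * lorentz_norm w p x" for x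
    using e lnorm_nonneg[of x] by (simp add: lnorm Nd_0)
  then show "\<exists>T\<in>J_j w p. \<forall>x\<in>lorentz_space w p. lorentz_norm w p (\<lambda>k. Bop x k - T x k) \<le> \<epsilon> * lorentz_norm w p x"
    using Bop_Jj by blast
qed

definition bt :: "nat \<Rightarrow> real" where "bt n = 1 / W (Nb n) powr (1/p)"
definition un :: "nat \<Rightarrow> seq" where "un n = (\<lambda>k. if k \<in> Ib n then bt n else 0)"

lemma bt_pos: "0 < bt n" unfolding bt_def using W_ge1[OF Nb_ge1[of n]] by simp

lemma bt_pow: "bt n powr p * W (Nb n) = 1"
proof -
  have W: "W (Nb n) \<ge> 1" using W_ge1[OF Nb_ge1[of n]] .
  have "bt n powr p = 1 / W (Nb n)" unfolding bt_def using W p0 by (simp add: powr_divide powr_powr)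
  then show ?thesis using W by simp
qed

lemma un_lor: "un n \<in> lorentz_space w p \<and> Nd (un n) \<le> 1"
proof -
  have c00: "(\<lambda>k. 0::real) \<in> c0" using zero_lor by (simp add: lor_iff)
  have c: "un n \<in> c0" by (rule c0_ev[OF c00, of "sb n + Nb n"]) (auto simp: un_def Ib_def)
  have b: "bnd (un n)" by (rule c0_bnd[OF c])
  have r1: "rearr (un n) i \<le> bt n" for i
    by (rule rearr_bound[OF b]) (use bt_pos[of n] in \<open>auto simp: un_def\<close>)
  have r0: "i \<ge> Nb n \<Longrightarrow> rearr (un n) i = 0" for i
    by (rule rearr_finsupp[OF b Ib_fin]) (auto simp: Ib_card un_def)
  define t where "t i = w i * rearr (un n) i powr p" for i
  have tnn: "0 \<le> t i" for i unfolding t_def by (rule term_nonneg)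
  have tle: "t i \<le> w i * bt n powr p" for i unfolding t_def
    using r1[of i] rearr_nonneg[OF b, of i] p0 w_nonneg[of i] by (intro mult_left_mono powr_mono2) auto
  have "(\<Sum>i<K. t i) \<le> 1" for K
  proof -
    have "(\<Sum>i<K. t i) \<le> (\<Sum>i<K + Nb n. t i)" by (intro sum_mono2) (auto simp: tnn)
    also have "\<dots> = (\<Sum>i<K + Nb n. if i < Nb n then t i else 0)"
      using r0 p0 by (intro sum.cong) (auto simp: t_def)
    also have "\<dots> = (\<Sum>i<Nb n. t i)" by (rule sum_if_lt) simp
    also have "\<dots> \<le> (\<Sum>i<Nb n. w i * bt n powr p)" by (intro sum_mono tle)
    also have "\<dots> = bt n powr p * W (Nb n)" unfolding W_def by (simp add: sum_distrib_right mult.commute)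
    also have "\<dots> = 1" by (rule bt_pow)
    finally show ?thesis .
  qed
  then have "summable t" "suminf t \<le> 1" using nonneg_bounded_sum[of t 1] tnn by auto
  then show ?thesis using c unfolding lor_iff Nd_def t_def by auto
qed

lemma Bop_un: "Bop (un n) = (\<lambda>m. if m = n then 1 else 0)"
proof
  fix m
  show "Bop (un n) m = (if m = n then 1 else 0)"
  proof (cases "m = n")
    case True
    have "(\<Sum>k\<in>Ib n. un n k) = real (Nb n) * bt n" unfolding un_def by (simp add: Ib_card)
    moreover have "ab n * (real (Nb n) * bt n) = 1" unfolding ab_def bt_def
      using Nb_ge1[of n] W_ge1[OF Nb_ge1[of n]] by simp
    ultimately show ?thesis unfolding Bop_def True by simp
  next
    case False
    have "(\<Sum>k\<in>Ib m. un n k) = 0" unfolding un_def using Ib_disj[OF False] by (intro sum.neutral) auto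
    then show ?thesis unfolding Bop_def using False by simp
  qed
qed

lemma Bop_noncompact: "Bop \<notin> compact_ops w p"
proof
  assume "Bop \<in> compact_ops w p"
  moreover have "\<forall>i. un i \<in> lorentz_space w p \<and> lorentz_norm w p (un i) \<le> 1"
  proof
    fix i
    have "Nd (un i) powr (1/p) \<le> 1 powr (1/p)"
      using un_lor[of i] Nd_nonneg p0 by (intro powr_mono2) auto
    then show "un i \<in> lorentz_space w p \<and> lorentz_norm w p (un i) \<le> 1"
      using un_lor[of i] unfolding lnorm by simp
  qed
  ultimately obtain r y where r: "strict_mono r" and y: "y \<in> lorentz_space w p"
    and lim: "(\<lambda>i. lorentz_norm w p (\<lambda>k. Bop (un (r i)) k - y k)) \<longlonglongrightarrow> 0"
    unfolding compact_ops_def by blast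
  have l1: "(\<lambda>i. Nd (\<lambda>k. Bop (un (r i)) k - y k)) \<longlonglongrightarrow> 0" by (rule Nd_of_lnorm[OF lim])
  have "y \<longlonglongrightarrow> 0" using y by (simp add: lor_iff c0_def)
  then have l2: "(\<lambda>i. y (r i)) \<longlonglongrightarrow> 0" using LIMSEQ_subseq_LIMSEQ[OF _ r] by (simp add: comp_def)
  have hp: "(1/2::real) powr p > 0" by simp
  have ev1: "\<forall>\<^sub>F i in sequentially. Nd (\<lambda>k. Bop (un (r i)) k - y k) < (1/2) powr p"
    using order_tendstoD(2)[OF l1 hp] .
  have ev2: "\<forall>\<^sub>F i in sequentially. \<bar>y (r i)\<bar> < 1/2"
    using order_tendstoD(2)[OF tendsto_rabs[OF l2], of "1/2"] by simp
  obtain i where i1: "Nd (\<lambda>k. Bop (un (r i)) k - y k) < (1/2) powr p" and i2: "\<bar>y (r i)\<bar> < 1/2"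
    using eventually_conj[OF ev1 ev2] by (auto simp: eventually_sequentially)
  define z where "z = (\<lambda>k. Bop (un (r i)) k - y k)"
  have zl: "z \<in> lorentz_space w p" unfolding z_def
    using lor_add(1)[OF Ld_D(1)[OF Bop_Ld conjunct1[OF un_lor]] lor_scale(1)[OF y, of "-1"]] by simp
  have "z (r i) = 1 - y (r i)" unfolding z_def Bop_un by simp
  then have "\<bar>z (r i)\<bar> > 1/2" using i2 by linarith
  then have "(1/2) powr p < \<bar>z (r i)\<bar> powr p" using p0 by (intro powr_less_mono2) auto
  also have "\<dots> \<le> Nd z" by (rule Nd_ge_abs[OF zl])
  finally show False using i1 unfolding z_def by simp
qed

end

theorem corollary4p4:
  fixes w :: "nat \<Rightarrow> real" and p :: real
  assumes "1 \<le> p"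
    and "w 0 = 1"
    and "\<And>n. w (Suc n) \<le> w n"
    and "w \<longlonglongrightarrow> 0"
    and "\<not> summable w"
  shows "compact_ops w p \<subset> op_closure w p (J_j w p)
       \<and> J_j w p \<subseteq> strictly_singular_ops w p \<inter> J_lp w p"
proof -
  interpret lor w p using assms by unfold_locales auto
  have "compact_ops w p \<subset> op_closure w p (J_j w p)"
    using part_a Bop_clos Bop_noncompact by blast
  moreover have "J_j w p \<subseteq> strictly_singular_ops w p \<inter> J_lp w p"
    using part_c part_d by blast
  ultimately show ?thesis by blast
qed


end
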